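(* Consider the noiseless model with $N_0(n)\ge1$, and assume either (F2) or (F'). Let $\ell<0$, and start the process from $X_n(0)=N_0(n)$, $L_n(0)=\ell$. Then $$p_{N_0(n)}(n,\ell)=\exp\Big(-\frac{\ell^2}{2\mu_{N_0(n)-1}(n)}\Big).$$ For $0<k<N_0(n)$, $$p_k(n,\ell)=\Big(\prod_{j=k}^{N_0(n)-1}\frac1{\mu_j(n)}\Big)\sum_{j=k-1}^{N_0(n)-1}\Big(\exp\Big(-\frac{\ell^2}{2\mu_j(n)}\Big)\prod_{\substack{i=k-1\\ i\ne j}}^{N_0(n)-1}\frac1{1/\mu_i(n)-1/\mu_j(n)}\Big).$$ Finally, $p_0(n,\ell)=1-\sum_{k=1}^{N_0(n)}p_k(n,\ell)$.
   Context: **Discrete processes with memory.** Fix $n\ge2$ and let $\mathcal D_n=\{0,1,\dots,n\}$. Fix reals $v_j(n)$, $j\in\mathcal D_n$, and functions $a_{ij}:\mathbb R\to[0,\infty)$. The process $(X_n(t),L_n(t))_{t\ge0}$ with values in $\mathcal D_n\times\mathbb R$ is built from its initial value and an independent family $(E^j_k)_{j\in\mathcal D_n,k\ge0}$ of i.i.d. mean-one exponential random variables, as follows. - Set $T_0=0$. - If $X_n(T_k)=x$ and $L_n(T_k)=y$, let $T^j_{k+1}=\inf\{t>T_k:\int_{T_k}^ta_{xj}(y+v_x(n)(s-T_k))\,ds\ge E^j_k\}$ (with $\inf\emptyset=\infty$) and $T_{k+1}=\min_jT^j_{k+1}$. - On $[T_k,T_{k+1})$ put $X_n(s)=x$; on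 $[T_k,T_{k+1}]$ put $L_n(s)=y+v_x(n)(s-T_k)$. - $X_n(T_{k+1})$ is the index $j$ attaining the minimum. Thus $L_n(t)=L_n(0)+\sum_jv_j(n)\,\mathrm{Leb}\{s\le t:X_n(s)=j\}$. **Noiseless model.** There are integers $N_0(n),N_1(n)$ with $0\le N_0(n),N_1(n)<n/2$ and $N_k(n)/n\to0$. - Boundary layers: $\partial\mathcal D_n^-=\{0,\dots,N_0(n)\}$ and $\partial\mathcal D_n^+=\{n-N_1(n),\dots,n\}$. - Memory rates: $v_j(n)>0$ for $j\in\partial\mathcal D_n^-$, $v_j(n)<0$ for $j\in\partial\mathcal D_n^+$, and $v_j(n)=0$ otherwise. Moreover $\sum_{j=0}^{N_0(n)}v_j(n)=\sum_{j=0}^{N_1(n)}|v_{n-j}(n)|=n$. - Jump rates: $a_{ij}\equiv0$ if $|i-j|\ne1$. For $0\le i\le n-1$, $a_{i,i+1}(\ell)=c_i(n)\max(\ell,0)$ and $a_{i+1,i}(\ell)=c_i(n)\max(-\ell,0)$, where - $c_i(n)=\sum_{m=0}^iv_m(n)$ for $0\le i\le N_0(n)$, - $c_i(n)=n$ for $N_0(n)\le i\le n-N_1(n)-1$, - $c_{n-1-i}(n)=\sum_{m=0}^i|v_{n-m}(n)|$ for $0\le i\le N_1(n)$. - Ratios: $\lambda_i(n)=v_i(n)/c_i(n)$ for $0\le i\le N_0(n)$, and $\mu_i(n)=v_{i+1}(n)/c_i(n)$ for $0\le i\le N_0(n)-1$. - Conditions: - (F2): the $\mu_i(n)$, $0\le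 i\le N_0(n)-1$, are pairwise distinct; - (F'): $v_j(n)\ge v_{j+1}(n)>0$ for $0\le j\le N_0(n)-1$. **Reversal quantities.** Start from $X_n(0)=N_0(n)$, $L_n(0)=\ell<0$. Let $\mathcal T_n=\inf\{t\ge0:L_n(t)\ge0\}$ and $G_n=X_n(\mathcal T_n)$ (the level at which the memory changes sign). Set $p_j(n,\ell)=P(G_n=j\mid X_n(0)=N_0(n),L_n(0)=\ell)$. *)

theory Defs
  imports "HOL-Probability.Probability"
begin

text \<open>State space D_n = {0..n}. Parameters: v (memory rates v_j(n)), a (jump rate functions a_ij),
  initial position x0, initial memory y0, and a sample e j k of the clocks E^j_k.\<close>

text \<open>Candidate holding time for a jump to j when the last jump (the k-th) left the process at
  level x with memory y: the time elapsed after T_k until the integrated rate reaches e.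
  inf of the empty set is +infinity (extended reals).  Written relative to T_k, i.e.
  T^j_{k+1} - T_k.\<close>
definition clock_time :: "(nat \<Rightarrow> real) \<Rightarrow> (nat \<Rightarrow> nat \<Rightarrow> real \<Rightarrow> real) \<Rightarrow> nat \<Rightarrow> real \<Rightarrow> nat \<Rightarrow> real \<Rightarrow> ereal" where
  "clock_time v a x y j e =
     Inf {ereal u | u. 0 < u \<and> e \<le> integral {0..u} (\<lambda>s. a x j (y + v x * s))}"

definition hold_time :: "nat \<Rightarrow> (nat \<Rightarrow> real) \<Rightarrow> (nat \<Rightarrow> nat \<Rightarrow> real \<Rightarrow> real) \<Rightarrow> nat \<Rightarrow> real \<Rightarrow> (nat \<Rightarrow> real) \<Rightarrow> ereal" where
  "hold_time n v a x y e = Min ((\<lambda>j. clock_time v a x y j (e j)) ` {..n})"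

text \<open>Index attaining the minimum (ties, a null event, broken by taking the least index).\<close>
definition next_level :: "nat \<Rightarrow> (nat \<Rightarrow> real) \<Rightarrow> (nat \<Rightarrow> nat \<Rightarrow> real \<Rightarrow> real) \<Rightarrow> nat \<Rightarrow> real \<Rightarrow> (nat \<Rightarrow> real) \<Rightarrow> nat" where
  "next_level n v a x y e =
     (LEAST j. j \<le> n \<and> clock_time v a x y j (e j) = hold_time n v a x y e)"

text \<open>Embedded jump chain: (T_k, X_n(T_k), L_n(T_k)).  Once T_k = infinity no further jump occurs.\<close>
fun jump_chain :: "nat \<Rightarrow> (nat \<Rightarrow> real) \<Rightarrow> (nat \<Rightarrow> nat \<Rightarrow> real \<Rightarrow> real) \<Rightarrow> nat \<Rightarrow> real \<Rightarrow>
    (nat \<Rightarrow> nat \<Rightarrow> real) \<Rightarrow> nat \<Rightarrow> ereal \<times> nat \<times> real" where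
  "jump_chain n v a x0 y0 e 0 = (0, x0, y0)"
| "jump_chain n v a x0 y0 e (Suc k) =
     (case jump_chain n v a x0 y0 e k of (T, x, y) \<Rightarrow>
        (let h = hold_time n v a x y (\<lambda>j. e j k) in
         if T = \<infinity> \<or> h = \<infinity> then (\<infinity>, x, y)
         else (T + h, next_level n v a x y (\<lambda>j. e j k), y + v x * real_of_ereal h)))"

definition interval_index :: "nat \<Rightarrow> (nat \<Rightarrow> real) \<Rightarrow> (nat \<Rightarrow> nat \<Rightarrow> real \<Rightarrow> real) \<Rightarrow> nat \<Rightarrow> real \<Rightarrow>
    (nat \<Rightarrow> nat \<Rightarrow> real) \<Rightarrow> real \<Rightarrow> nat" where
  "interval_index n v a x0 y0 e t = (LEAST k. ereal t < fst (jump_chain n v a x0 y0 e (Suc k)))"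

definition proc_X :: "nat \<Rightarrow> (nat \<Rightarrow> real) \<Rightarrow> (nat \<Rightarrow> nat \<Rightarrow> real \<Rightarrow> real) \<Rightarrow> nat \<Rightarrow> real \<Rightarrow>
    (nat \<Rightarrow> nat \<Rightarrow> real) \<Rightarrow> real \<Rightarrow> nat" where
  "proc_X n v a x0 y0 e t =
     fst (snd (jump_chain n v a x0 y0 e (interval_index n v a x0 y0 e t)))"

definition proc_L :: "nat \<Rightarrow> (nat \<Rightarrow> real) \<Rightarrow> (nat \<Rightarrow> nat \<Rightarrow> real \<Rightarrow> real) \<Rightarrow> nat \<Rightarrow> real \<Rightarrow>
    (nat \<Rightarrow> nat \<Rightarrow> real) \<Rightarrow> real \<Rightarrow> real" where
  "proc_L n v a x0 y0 e t =
     (case jump_chain n v a x0 y0 e (interval_index n v a x0 y0 e t) of (T, x, y) \<Rightarrow>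
        y + v x * (t - real_of_ereal T))"

text \<open>The reversal event {calT_n < infinity and G_n = j}, where calT_n = inf {t >= 0. L_n(t) >= 0}
  and G_n = X_n(calT_n).\<close>
definition reversal_at :: "nat \<Rightarrow> (nat \<Rightarrow> real) \<Rightarrow> (nat \<Rightarrow> nat \<Rightarrow> real \<Rightarrow> real) \<Rightarrow> nat \<Rightarrow> real \<Rightarrow>
    (nat \<Rightarrow> nat \<Rightarrow> real) \<Rightarrow> nat \<Rightarrow> bool" where
  "reversal_at n v a x0 y0 e j \<longleftrightarrow>
     (\<exists>t\<ge>0. 0 \<le> proc_L n v a x0 y0 e t) \<and>
     proc_X n v a x0 y0 e (Inf {t. 0 \<le> t \<and> 0 \<le> proc_L n v a x0 y0 e t}) = j"

definition noiseless_memory :: "nat \<Rightarrow> nat \<Rightarrow> nat \<Rightarrow> (nat \<Rightarrow> real) \<Rightarrow> bool" where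
  "noiseless_memory n N0 N1 v \<longleftrightarrow>
     2 \<le> n \<and> 2 * N0 < n \<and> 2 * N1 < n \<and>
     (\<forall>j\<le>N0. 0 < v j) \<and> (\<forall>j. n - N1 \<le> j \<and> j \<le> n \<longrightarrow> v j < 0) \<and>
     (\<forall>j. N0 < j \<and> j < n - N1 \<longrightarrow> v j = 0) \<and>
     (\<Sum>j=0..N0. v j) = real n \<and> (\<Sum>j=0..N1. \<bar>v (n - j)\<bar>) = real n"

definition cc :: "nat \<Rightarrow> nat \<Rightarrow> nat \<Rightarrow> (nat \<Rightarrow> real) \<Rightarrow> nat \<Rightarrow> real" where
  "cc n N0 N1 v i =
     (if i \<le> N0 then (\<Sum>m=0..i. v m)
      else if i \<le> n - N1 - 1 then real n
      else (\<Sum>m=0..n - 1 - i. \<bar>v (n - m)\<bar>))"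

definition noiseless_rate :: "nat \<Rightarrow> nat \<Rightarrow> nat \<Rightarrow> (nat \<Rightarrow> real) \<Rightarrow> nat \<Rightarrow> nat \<Rightarrow> real \<Rightarrow> real" where
  "noiseless_rate n N0 N1 v i j l =
     (if j = i + 1 \<and> i \<le> n - 1 then cc n N0 N1 v i * max l 0
      else if i = j + 1 \<and> j \<le> n - 1 then cc n N0 N1 v j * max (- l) 0
      else 0)"

definition mu :: "nat \<Rightarrow> nat \<Rightarrow> nat \<Rightarrow> (nat \<Rightarrow> real) \<Rightarrow> nat \<Rightarrow> real" where
  "mu n N0 N1 v i = v (i + 1) / cc n N0 N1 v i"

definition condF2 :: "nat \<Rightarrow> nat \<Rightarrow> nat \<Rightarrow> (nat \<Rightarrow> real) \<Rightarrow> bool" where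
  "condF2 n N0 N1 v \<longleftrightarrow> inj_on (mu n N0 N1 v) {0..<N0}"

definition condF' :: "nat \<Rightarrow> (nat \<Rightarrow> real) \<Rightarrow> bool" where
  "condF' N0 v \<longleftrightarrow> (\<forall>j<N0. v j \<ge> v (j + 1) \<and> v (j + 1) > 0)"

end

theory Submission
  imports Defs
begin


lemma pf_aux: "(p::real) \<noteq> 0 \<Longrightarrow> q \<noteq> 0 \<Longrightarrow> q \<noteq> p \<Longrightarrow>
   1/p*(1/q)*P = (1/p*P - 1/q*P)/(q-p)"
  by (simp add: field_simps)

lemma inv_antisym: "1/(a - b) + 1/(b - a) = (0::real)"
proof -
  have "1/(b - a) = - (1/(a - b))" by (metis minus_diff_eq minus_divide_right)
  thus ?thesis by simp
qed

definition DD :: "(nat \<Rightarrow> real) \<Rightarrow> nat set \<Rightarrow> real" where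
  "DD r A = (\<Sum>a\<in>A. \<Prod>b\<in>A-{a}. 1 / (r b - r a))"

lemma DD_rec:
  assumes "finite B" "x \<notin> B" "y \<notin> B" "x \<noteq> y" "inj_on r (insert x (insert y B))"
  shows "DD r (insert x (insert y B)) = (DD r (insert x B) - DD r (insert y B)) / (r y - r x)"
proof -
  have rxy: "r y - r x \<noteq> 0"
  proof
    assume "r y - r x = 0"
    hence "r y = r x" by simp
    hence "y = x" using inj_onD[OF assms(5), of y x] by auto
    thus False using assms(4) by simp
  qed
  have ra: "a \<in> B \<Longrightarrow> r x - r a \<noteq> 0 \<and> r y - r a \<noteq> 0" for a
  proof -
    assume a: "a \<in> B"
    have "r x \<noteq> r a" using a assms inj_onD[OF assms(5), of x a] by auto
    moreover have "r y \<noteq> r a" using a assms inj_onD[OF assms(5), of y a] by auto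
    ultimately show ?thesis by simp
  qed
  define P where "P a = (\<Prod>b\<in>B-{a}. 1 / (r b - r a))" for a
  have t1: "(\<Prod>b\<in>insert x (insert y B)-{a}. 1 / (r b - r a)) = 1/(r x - r a) * (1/(r y - r a)) * P a"
    if "a \<in> B" for a
  proof -
    have "insert x (insert y B)-{a} = insert x (insert y (B-{a}))" using that assms by auto
    thus ?thesis using assms that unfolding P_def by (simp add: prod.insert)
  qed
  have t2: "(\<Prod>b\<in>insert x B-{a}. 1 / (r b - r a)) = 1/(r x - r a) * P a" if "a \<in> B" for a
  proof -
    have "insert x B-{a} = insert x (B-{a})" using that assms by auto
    thus ?thesis using assms that unfolding P_def by (simp add: prod.insert)
  qed
  have t3: "(\<Prod>b\<in>insert y B-{a}. 1 / (r b - r a)) = 1/(r y - r a) * P a" if "a \<in> B" for a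
  proof -
    have "insert y B-{a} = insert y (B-{a})" using that assms by auto
    thus ?thesis using assms that unfolding P_def by (simp add: prod.insert)
  qed
  define Qx where "Qx = (\<Prod>b\<in>B. 1 / (r b - r x))"
  define Qy where "Qy = (\<Prod>b\<in>B. 1 / (r b - r y))"
  have ex1: "insert x (insert y B) - {x} = insert y B" "insert x (insert y B) - {y} = insert x B"
    "insert x B - {x} = B" "insert y B - {y} = B" using assms by auto
  have L: "DD r (insert x (insert y B)) = 1/(r y - r x) * Qx + 1/(r x - r y) * Qy
      + (\<Sum>a\<in>B. 1/(r x - r a) * (1/(r y - r a)) * P a)"
    unfolding DD_def using assms
    by (simp add: ex1 sum.insert prod.insert Qx_def Qy_def t1 cong: sum.cong)
  have R1: "DD r (insert x B) = Qx + (\<Sum>a\<in>B. 1/(r x - r a) * P a)"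
    unfolding DD_def using assms by (simp add: ex1 sum.insert Qx_def t2 cong: sum.cong)
  have R2: "DD r (insert y B) = Qy + (\<Sum>a\<in>B. 1/(r y - r a) * P a)"
    unfolding DD_def using assms by (simp add: ex1 sum.insert Qy_def t3 cong: sum.cong)
  have S: "(\<Sum>a\<in>B. 1/(r x - r a) * (1/(r y - r a)) * P a) =
      ((\<Sum>a\<in>B. 1/(r x - r a) * P a) - (\<Sum>a\<in>B. 1/(r y - r a) * P a)) / (r y - r x)"
  proof -
    have "(\<Sum>a\<in>B. 1/(r x - r a) * (1/(r y - r a)) * P a) =
       (\<Sum>a\<in>B. (1/(r x - r a) * P a - 1/(r y - r a) * P a) / (r y - r x))"
    proof (intro sum.cong refl)
      fix a assume a: "a \<in> B"
      have "(r y - r a) - (r x - r a) = r y - r x" by simp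
      thus "1/(r x - r a) * (1/(r y - r a)) * P a = (1/(r x - r a) * P a - 1/(r y - r a) * P a) / (r y - r x)"
        using pf_aux[of "r x - r a" "r y - r a" "P a"] ra[OF a] rxy by auto
    qed
    thus ?thesis by (simp add: sum_divide_distrib[symmetric] sum_subtractf)
  qed
  have fin: "\<And>d Qx Qy A B::real. d \<noteq> 0 \<Longrightarrow> 1/d*Qx + 1/(-d)*Qy + (A - B)/d = ((Qx + A) - (Qy + B))/d"
    by (simp add: field_simps)
  have m: "r x - r y = -(r y - r x)" by simp
  define SA where "SA = (\<Sum>a\<in>B. 1/(r x - r a) * P a)"
  define SB where "SB = (\<Sum>a\<in>B. 1/(r y - r a) * P a)"
  have "DD r (insert x (insert y B)) = 1/(r y - r x)*Qx + 1/(-(r y - r x))*Qy + (SA - SB)/(r y - r x)"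
    unfolding L S SA_def SB_def m by simp
  also have "\<dots> = ((Qx+SA) - (Qy+SB))/(r y - r x)" by (rule fin[OF rxy])
  finally show ?thesis using R1 R2 unfolding SA_def SB_def by simp
qed

lemma DD_zero: "finite A \<Longrightarrow> 2 \<le> card A \<Longrightarrow> inj_on r A \<Longrightarrow> DD r A = 0"
proof (induction "card A" arbitrary: A rule: less_induct)
  case less
  obtain x where x: "x \<in> A" using less.prems by fastforce
  have "2 \<le> card (A - {x})" if False using that by simp
  have c1: "card (A - {x}) = card A - 1" using x less.prems by simp
  have "card (A - {x}) \<noteq> 0" using c1 less.prems by simp
  hence "A - {x} \<noteq> {}" by (metis card.empty)
  then obtain y where y: "y \<in> A - {x}" by blast
  define B where "B = A - {x, y}"
  have A: "A = insert x (insert y B)" using x y unfolding B_def by auto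
  have fB: "finite B" "x \<notin> B" "y \<notin> B" "x \<noteq> y" using less.prems y unfolding B_def by auto
  show ?case
  proof (cases "B = {}")
    case True
    have e: "{x, y} - {y} = {x}" using fB by auto
    have "r x - r y = -(r y - r x)" by simp
    then show ?thesis unfolding A DD_def using fB True by (simp add: e inv_antisym)
  next
    case False
    have cB: "card (insert x B) < card A" "card (insert y B) < card A"
      "2 \<le> card (insert x B)" "2 \<le> card (insert y B)"
      using fB False less.prems unfolding A
      by (auto simp: card_insert_if card_gt_0_iff Suc_le_eq)
    have "DD r (insert x B) = 0" "DD r (insert y B) = 0"
      using less.hyps[OF cB(1) _ cB(3)] less.hyps[OF cB(2) _ cB(4)] fB less.prems A
      by (auto intro: inj_on_subset)
    then show ?thesis using DD_rec[OF fB] less.prems A by simp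
  qed
qed


definition cf :: "(nat \<Rightarrow> real) \<Rightarrow> nat \<Rightarrow> nat \<Rightarrow> real" where
  "cf r m j = (\<Prod>i\<in>{..m}-{j}. 1 / (r i - r j))"

definition Gf :: "(nat \<Rightarrow> real) \<Rightarrow> nat \<Rightarrow> real \<Rightarrow> real" where
  "Gf r m x = (\<Prod>i<m. r i) * (\<Sum>j\<le>m. exp (- r j * x) * cf r m j)"

lemma Gf_0: "Gf r 0 x = exp (- r 0 * x)"
  by (simp add: Gf_def cf_def)

lemma Gf_at0: assumes "inj_on r {..Suc k}" shows "Gf r (Suc k) 0 = 0"
proof -
  have "(\<Sum>j\<le>Suc k. cf r (Suc k) j) = DD r {..Suc k}" unfolding DD_def cf_def by simp
  also have "\<dots> = 0" by (rule DD_zero) (use assms in auto)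
  finally show ?thesis by (simp add: Gf_def)
qed

lemma Gf_deriv:
  "(Gf r m has_real_derivative ((\<Prod>i<m. r i) * (\<Sum>j\<le>m. - r j * exp (- r j * x) * cf r m j))) (at x)"
  unfolding Gf_def
  by (auto intro!: derivative_eq_intros sum.cong simp: sum_distrib_left mult_ac)

lemma cf_Suc: assumes "inj_on r {..Suc k}" "j \<le> k"
  shows "cf r (Suc k) j = cf r k j / (r (Suc k) - r j)"
proof -
  have e: "{..Suc k}-{j} = insert (Suc k) ({..k}-{j})" using assms by auto
  have "r (Suc k) \<noteq> r j" using assms inj_onD[OF assms(1), of "Suc k" j] by auto
  thus ?thesis unfolding cf_def e by (simp add: prod.insert field_simps)
qed

lemma Gf_ode:
  assumes "inj_on r {..Suc k}"
  shows "(\<Prod>i<Suc k. r i) * (\<Sum>j\<le>Suc k. - r j * exp (- r j * x) * cf r (Suc k) j)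
         + r (Suc k) * Gf r (Suc k) x = r k * Gf r k x"
proof -
  have ne: "j \<le> k \<Longrightarrow> r (Suc k) - r j \<noteq> 0" for j
    using inj_onD[OF assms(1), of "Suc k" j] by auto
  have "(\<Sum>j\<le>Suc k. - r j * exp (- r j * x) * cf r (Suc k) j) + r (Suc k) * (\<Sum>j\<le>Suc k. exp (- r j * x) * cf r (Suc k) j)
      = (\<Sum>j\<le>Suc k. (r (Suc k) - r j) * exp (- r j * x) * cf r (Suc k) j)"
    by (simp add: sum_distrib_left sum.distrib[symmetric] algebra_simps)
  also have "\<dots> = (\<Sum>j\<le>k. (r (Suc k) - r j) * exp (- r j * x) * cf r (Suc k) j)"
    by (simp add: atMost_Suc)
  also have "\<dots> = (\<Sum>j\<le>k. exp (- r j * x) * cf r k j)"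
    by (intro sum.cong refl) (use ne in \<open>simp add: cf_Suc[OF assms]\<close>)
  finally have *: "(\<Sum>j\<le>Suc k. - r j * exp (- r j * x) * cf r (Suc k) j) + r (Suc k) * (\<Sum>j\<le>Suc k. exp (- r j * x) * cf r (Suc k) j)
      = (\<Sum>j\<le>k. exp (- r j * x) * cf r k j)" .
  have "(\<Prod>i<Suc k. r i) * (\<Sum>j\<le>Suc k. - r j * exp (- r j * x) * cf r (Suc k) j)
         + r (Suc k) * Gf r (Suc k) x = (\<Prod>i<Suc k. r i) * ((\<Sum>j\<le>Suc k. - r j * exp (- r j * x) * cf r (Suc k) j) + r (Suc k) * (\<Sum>j\<le>Suc k. exp (- r j * x) * cf r (Suc k) j))"
    unfolding Gf_def by (simp add: algebra_simps)
  also have "\<dots> = r k * Gf r k x" unfolding * Gf_def by (simp add: lessThan_Suc)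
  finally show ?thesis .
qed

lemma Gf_cont: "continuous_on S (Gf r m)"
  unfolding Gf_def by (intro continuous_intros)

lemma Gf_FTC:
  assumes "inj_on r {..Suc k}" "0 \<le> x"
  shows "((\<lambda>y. r k * Gf r k y * exp (r (Suc k) * y)) has_integral (Gf r (Suc k) x * exp (r (Suc k) * x))) {0..x}"
proof -
  have "((\<lambda>y. r k * Gf r k y * exp (r (Suc k) * y)) has_integral
        (Gf r (Suc k) x * exp (r (Suc k) * x) - Gf r (Suc k) 0 * exp (r (Suc k) * 0))) {0..x}"
  proof (rule fundamental_theorem_of_calculus[OF assms(2)])
    fix y assume "y \<in> {0..x}"
    have "((\<lambda>y. Gf r (Suc k) y * exp (r (Suc k) * y)) has_real_derivative
       (((\<Prod>i<Suc k. r i) * (\<Sum>j\<le>Suc k. - r j * exp (- r j * y) * cf r (Suc k) j)) * exp (r (Suc k) * y)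
        + (exp (r (Suc k) * y) * r (Suc k)) * Gf r (Suc k) y)) (at y)"
      by (rule DERIV_mult[OF Gf_deriv]) (auto intro!: derivative_eq_intros)
    also have "(((\<Prod>i<Suc k. r i) * (\<Sum>j\<le>Suc k. - r j * exp (- r j * y) * cf r (Suc k) j)) * exp (r (Suc k) * y)
        + (exp (r (Suc k) * y) * r (Suc k)) * Gf r (Suc k) y) = r k * Gf r k y * exp (r (Suc k) * y)"
    proof -
      have e: "\<And>A e G. A * e + (e * r (Suc k)) * G = (A + r (Suc k) * G) * (e::real)"
        by (simp add: algebra_simps)
      show ?thesis unfolding e Gf_ode[OF assms(1), of y] ..
    qed
    finally show "((\<lambda>y. Gf r (Suc k) y * exp (r (Suc k) * y)) has_vector_derivative r k * Gf r k y * exp (r (Suc k) * y)) (at y within {0..x})"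
      by (simp add: has_real_derivative_iff_has_vector_derivative[symmetric] has_field_derivative_at_within)
  qed
  thus ?thesis using Gf_at0[OF assms(1)] by simp
qed

lemma Gf_nonneg: assumes "\<And>i. i \<le> m \<Longrightarrow> 0 < r i" "inj_on r {..m}" "0 \<le> x"
  shows "0 \<le> Gf r m x"
  using assms
proof (induction m arbitrary: x)
  case 0 thus ?case by (simp add: Gf_0)
next
  case (Suc k)
  have inj: "inj_on r {..k}" using Suc.prems(2) by (rule inj_on_subset) auto
  have ih: "0 \<le> Gf r k y" if "0 \<le> y" for y
    using Suc.IH[OF _ inj that] Suc.prems by auto
  have "0 \<le> Gf r (Suc k) x * exp (r (Suc k) * x)"
    using Gf_FTC[OF Suc.prems(2,3)]
    by (rule has_integral_nonneg) (use ih Suc.prems(1)[of k] in \<open>auto intro!: mult_nonneg_nonneg less_imp_le\<close>)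
  thus ?case by (simp add: zero_le_mult_iff)
qed


definition hdn :: "(nat \<Rightarrow> real) \<Rightarrow> nat \<Rightarrow> real \<Rightarrow> real" where
  "hdn r k x = (if x < 0 then 0 else r k * Gf r k x)"

lemma hdn_meas[measurable]: "hdn r k \<in> borel_measurable borel"
proof -
  have "continuous_on UNIV (Gf r k)" by (rule Gf_cont)
  hence "Gf r k \<in> borel_measurable borel" by (rule borel_measurable_continuous_onI)
  thus ?thesis unfolding hdn_def by measurable
qed

lemma Gf_FTC2:
  assumes "inj_on r {..Suc k}" "0 \<le> w"
  shows "((\<lambda>y. r k * Gf r k y - r (Suc k) * Gf r (Suc k) y) has_integral Gf r (Suc k) w) {0..w}"
proof -
  have "((\<lambda>y. r k * Gf r k y - r (Suc k) * Gf r (Suc k) y) has_integral (Gf r (Suc k) w - Gf r (Suc k) 0)) {0..w}"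
  proof (rule fundamental_theorem_of_calculus[OF assms(2)])
    fix y assume "y \<in> {0..w}"
    have "(Gf r (Suc k) has_real_derivative r k * Gf r k y - r (Suc k) * Gf r (Suc k) y) (at y)"
      using Gf_deriv[of r "Suc k" y] Gf_ode[OF assms(1), of y]
      by (metis add_diff_cancel_right')
    thus "(Gf r (Suc k) has_vector_derivative r k * Gf r k y - r (Suc k) * Gf r (Suc k) y) (at y within {0..w})"
      by (simp add: has_real_derivative_iff_has_vector_derivative[symmetric] has_field_derivative_at_within)
  qed
  thus ?thesis using Gf_at0[OF assms(1)] by simp
qed

context prob_space begin

lemma hyp_dens:
  fixes X :: "nat \<Rightarrow> 'a \<Rightarrow> real"
  assumes pos: "\<And>i. i \<le> m \<Longrightarrow> 0 < r i" and inj: "inj_on r {..m}"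
    and dX: "\<And>i. i \<le> m \<Longrightarrow> distributed M lborel (X i) (\<lambda>x. ennreal (exponential_density (r i) x))"
    and ind: "indep_vars (\<lambda>_. borel) X {..m}"
  shows "k \<le> m \<Longrightarrow> distributed M lborel (\<lambda>\<omega>. \<Sum>i\<le>k. X i \<omega>) (\<lambda>x. ennreal (hdn r k x))"
proof (induction k)
  case 0
  have "(\<lambda>x. ennreal (hdn r 0 x)) = (\<lambda>x. ennreal (exponential_density (r 0) x))"
    by (auto simp: hdn_def exponential_density_def Gf_0 mult_ac)
  thus ?case using dX[of 0] by simp
next
  case (Suc k)
  have km: "k \<le> m" "Suc k \<le> m" using Suc.prems by auto
  have injk: "inj_on r {..Suc k}" using inj by (rule inj_on_subset) (use km in auto)
  have S: "distributed M lborel (\<lambda>\<omega>. \<Sum>i\<in>{..k}. X i \<omega>) (\<lambda>x. ennreal (hdn r k x))"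
    using Suc.IH km by simp
  have Y: "distributed M lborel (X (Suc k)) (\<lambda>x. ennreal (exponential_density (r (Suc k)) x))"
    using dX km by simp
  have ind2: "indep_var borel (X (Suc k)) borel (\<lambda>\<omega>. \<Sum>i\<in>{..k}. X i \<omega>)"
  proof (rule indep_vars_sum)
    show "indep_vars (\<lambda>_. borel) X (insert (Suc k) {..k})"
      by (rule indep_vars_subset[OF ind]) (use km in auto)
  qed auto
  have C: "distributed M lborel (\<lambda>\<omega>. X (Suc k) \<omega> + (\<Sum>i\<in>{..k}. X i \<omega>))
      (\<lambda>x. \<integral>\<^sup>+y. ennreal (exponential_density (r (Suc k)) (x - y)) * ennreal (hdn r k y) \<partial>lborel)"
    by (rule distributed_convolution[OF ind2 Y S])
  have rp: "0 < r (Suc k)" "0 < r k" using pos km by auto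
  have injk0: "inj_on r {..k}" using inj by (rule inj_on_subset) (use km in auto)
  have Gk: "0 \<le> Gf r k y" if "0 \<le> y" for y
    by (rule Gf_nonneg[OF _ injk0 that]) (use pos km in auto)
  have dens: "(\<integral>\<^sup>+y. ennreal (exponential_density (r (Suc k)) (x - y)) * ennreal (hdn r k y) \<partial>lborel)
     = ennreal (hdn r (Suc k) x)" for x
  proof (cases "x < 0")
    case True
    have "(\<integral>\<^sup>+y. ennreal (exponential_density (r (Suc k)) (x - y)) * ennreal (hdn r k y) \<partial>lborel)
       = (\<integral>\<^sup>+(y::real). 0 \<partial>lborel)"
      by (rule nn_integral_cong) (use True in \<open>auto simp: hdn_def exponential_density_def\<close>)
    thus ?thesis using True by (simp add: hdn_def)
  next
    case False
    hence x0: "0 \<le> x" by simp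
    define f where "f y = (r (Suc k) * exp (- x * r (Suc k))) * (r k * Gf r k y * exp (r (Suc k) * y))" for y
    have "(f has_integral (r (Suc k) * exp (- x * r (Suc k))) * (Gf r (Suc k) x * exp (r (Suc k) * x))) {0..x}"
      unfolding f_def by (rule has_integral_mult_right[OF Gf_FTC[OF injk x0]])
    also have "(r (Suc k) * exp (- x * r (Suc k))) * (Gf r (Suc k) x * exp (r (Suc k) * x)) = hdn r (Suc k) x"
      using x0 by (simp add: hdn_def mult_exp_exp algebra_simps)
    finally have I: "(f has_integral hdn r (Suc k) x) {0..x}" .
    have fnn: "y \<in> {0..x} \<Longrightarrow> 0 \<le> f y" for y
      using Gk[of y] rp unfolding f_def
      by (auto intro!: mult_nonneg_nonneg less_imp_le)
    have "(\<integral>\<^sup>+y. ennreal (exponential_density (r (Suc k)) (x - y)) * ennreal (hdn r k y) \<partial>lborel)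
       = (\<integral>\<^sup>+y. ennreal (f y) * indicator {0..x} y \<partial>lborel)"
    proof (rule nn_integral_cong)
      fix y
      show "ennreal (exponential_density (r (Suc k)) (x - y)) * ennreal (hdn r k y) = ennreal (f y) * indicator {0..x} y"
      proof (cases "y \<in> {0..x}")
        case True
        have "exp (- (x - y) * r (Suc k)) = exp (- x * r (Suc k)) * exp (r (Suc k) * y)"
          by (simp add: mult_exp_exp algebra_simps)
        hence "exponential_density (r (Suc k)) (x - y) * hdn r k y = f y"
          using True unfolding f_def hdn_def exponential_density_def by (simp add: algebra_simps)
        moreover have "0 \<le> exponential_density (r (Suc k)) (x - y)" "0 \<le> hdn r k y"
          using True rp Gk[of y]
          by (auto simp: exponential_density_def hdn_def)
        ultimately show ?thesis using True by (simp add: ennreal_mult[symmetric])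
      next
        case False
        thus ?thesis by (auto simp: exponential_density_def hdn_def)
      qed
    qed
    also have "\<dots> = ennreal (hdn r (Suc k) x)"
      by (rule nn_integral_has_integral_lebesgue'[OF fnn I])
    finally show ?thesis .
  qed
  have "distributed M lborel (\<lambda>\<omega>. X (Suc k) \<omega> + (\<Sum>i\<in>{..k}. X i \<omega>)) (\<lambda>x. ennreal (hdn r (Suc k) x))"
    using C unfolding dens .
  moreover have "(\<lambda>\<omega>. X (Suc k) \<omega> + (\<Sum>i\<in>{..k}. X i \<omega>)) = (\<lambda>\<omega>. \<Sum>i\<le>Suc k. X i \<omega>)"
    by (simp add: atMost_Suc add.commute)
  ultimately show ?case by simp
qed

end


context prob_space begin

lemma hyp_prob:
  fixes X :: "nat \<Rightarrow> 'a \<Rightarrow> real"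
  assumes pos: "\<And>i. i \<le> m \<Longrightarrow> 0 < r i" and inj: "inj_on r {..m}"
    and dX: "\<And>i. i \<le> m \<Longrightarrow> distributed M lborel (X i) (\<lambda>x. ennreal (exponential_density (r i) x))"
    and ind: "indep_vars (\<lambda>_. borel) X {..m}"
    and km: "Suc k \<le> m" and w: "0 \<le> w"
  shows "prob {\<omega>\<in>space M. (\<Sum>i\<le>k. X i \<omega>) \<le> w \<and> w < (\<Sum>i\<le>k. X i \<omega>) + X (Suc k) \<omega>} = Gf r (Suc k) w"
proof -
  have injk: "inj_on r {..Suc k}" using inj by (rule inj_on_subset) (use km in auto)
  have Xm: "X i \<in> borel_measurable M" if "i \<le> m" for i
    using distributed_measurable[OF dX[OF that]] by simp
  define S where "S \<omega> = (\<Sum>i\<le>k. X i \<omega>)" for \<omega>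
  define T where "T \<omega> = (\<Sum>i\<le>Suc k. X i \<omega>)" for \<omega>
  have T: "T \<omega> = S \<omega> + X (Suc k) \<omega>" for \<omega> by (simp add: S_def T_def atMost_Suc)
  have Sm[measurable]: "S \<in> borel_measurable M" unfolding S_def using km
    by (intro borel_measurable_sum) (auto intro: Xm)
  have Tm[measurable]: "T \<in> borel_measurable M" unfolding T_def using km
    by (intro borel_measurable_sum) (auto intro: Xm)
  have Ym[measurable]: "X (Suc k) \<in> borel_measurable M" using km Xm by auto
  have cdf: "prob {\<omega>\<in>space M. (\<Sum>i\<le>j. X i \<omega>) \<le> w} = integral {0..w} (\<lambda>y. r j * Gf r j y)"
    if jm: "j \<le> m" for j
  proof -
    have injj: "inj_on r {..j}" using inj by (rule inj_on_subset) (use jm in auto)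
    have Gj: "0 \<le> Gf r j y" if "0 \<le> y" for y
      by (rule Gf_nonneg[OF _ injj that]) (use pos jm in auto)
    have D: "distributed M lborel (\<lambda>\<omega>. \<Sum>i\<le>j. X i \<omega>) (\<lambda>x. ennreal (hdn r j x))"
      by (rule hyp_dens[OF pos inj dX ind jm])
    have int: "((\<lambda>y. r j * Gf r j y) has_integral integral {0..w} (\<lambda>y. r j * Gf r j y)) {0..w}"
      by (intro integrable_integral integrable_continuous_interval continuous_intros Gf_cont)
    have nn: "y \<in> {0..w} \<Longrightarrow> 0 \<le> r j * Gf r j y" for y
      using Gj[of y] pos[OF jm] by auto
    have I0: "0 \<le> integral {0..w} (\<lambda>y. r j * Gf r j y)"
      by (rule has_integral_nonneg[OF int nn])
    have "emeasure M ((\<lambda>\<omega>. \<Sum>i\<le>j. X i \<omega>) -` {..w} \<inter> space M) = (\<integral>\<^sup>+x. ennreal (hdn r j x) * indicator {..w} x \<partial>lborel)"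
      by (rule distributed_emeasure[OF D]) simp
    also have "\<dots> = (\<integral>\<^sup>+x. ennreal (r j * Gf r j x) * indicator {0..w} x \<partial>lborel)"
      by (rule nn_integral_cong) (auto simp: hdn_def indicator_def)
    also have "\<dots> = ennreal (integral {0..w} (\<lambda>y. r j * Gf r j y))"
      by (rule nn_integral_has_integral_lebesgue'[OF nn int])
    finally have "emeasure M ((\<lambda>\<omega>. \<Sum>i\<le>j. X i \<omega>) -` {..w} \<inter> space M) = ennreal (integral {0..w} (\<lambda>y. r j * Gf r j y))" .
    moreover have "(\<lambda>\<omega>. \<Sum>i\<le>j. X i \<omega>) -` {..w} \<inter> space M = {\<omega>\<in>space M. (\<Sum>i\<le>j. X i \<omega>) \<le> w}" by auto
    ultimately show ?thesis using I0 by (simp add: emeasure_eq_measure)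
  qed
  have Ynn: "AE \<omega> in M. 0 \<le> X (Suc k) \<omega>"
  proof -
    have D: "distributed M lborel (X (Suc k)) (\<lambda>x. ennreal (exponential_density (r (Suc k)) x))"
      using dX km by simp
    have "emeasure M (X (Suc k) -` {..<0} \<inter> space M) = (\<integral>\<^sup>+x. ennreal (exponential_density (r (Suc k)) x) * indicator {..<0} x \<partial>lborel)"
      by (rule distributed_emeasure[OF D]) simp
    also have "\<dots> = (\<integral>\<^sup>+(x::real). 0 \<partial>lborel)"
      by (rule nn_integral_cong) (auto simp: exponential_density_def indicator_def)
    finally have "emeasure M (X (Suc k) -` {..<0} \<inter> space M) = 0" by simp
    hence "AE \<omega> in M. \<omega> \<notin> X (Suc k) -` {..<0} \<inter> space M"
      by (intro AE_I[of _ _ "X (Suc k) -` {..<0} \<inter> space M"]) auto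
    hence "AE \<omega> in M. \<not> X (Suc k) \<omega> < 0" by (rule AE_mp) (auto intro!: AE_I2)
    thus ?thesis by (rule AE_mp) (auto intro!: AE_I2)
  qed
  have A1: "prob {\<omega>\<in>space M. S \<omega> \<le> w} = integral {0..w} (\<lambda>y. r k * Gf r k y)"
    using cdf[of k] km unfolding S_def by simp
  have A2: "prob {\<omega>\<in>space M. T \<omega> \<le> w} = integral {0..w} (\<lambda>y. r (Suc k) * Gf r (Suc k) y)"
    using cdf[of "Suc k"] km unfolding T_def by simp
  have A3: "prob {\<omega>\<in>space M. S \<omega> \<le> w \<and> T \<omega> \<le> w} = prob {\<omega>\<in>space M. T \<omega> \<le> w}"
  proof (rule prob_eq_AE)
    show "AE \<omega> in M. (S \<omega> \<le> w \<and> T \<omega> \<le> w) \<longleftrightarrow> T \<omega> \<le> w"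
      using Ynn by (rule AE_mp) (auto intro!: AE_I2 simp: T)
  qed auto
  have "prob {\<omega>\<in>space M. S \<omega> \<le> w \<and> w < T \<omega>} =
        prob ({\<omega>\<in>space M. S \<omega> \<le> w} - {\<omega>\<in>space M. S \<omega> \<le> w \<and> T \<omega> \<le> w})"
    by (rule arg_cong[where f=prob]) auto
  also have "\<dots> = prob {\<omega>\<in>space M. S \<omega> \<le> w} - prob {\<omega>\<in>space M. S \<omega> \<le> w \<and> T \<omega> \<le> w}"
    by (rule finite_measure_Diff) auto
  also have "\<dots> = integral {0..w} (\<lambda>y. r k * Gf r k y) - integral {0..w} (\<lambda>y. r (Suc k) * Gf r (Suc k) y)"
    unfolding A1 A3 A2 ..
  also have "\<dots> = integral {0..w} (\<lambda>y. r k * Gf r k y - r (Suc k) * Gf r (Suc k) y)"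
    by (rule integral_diff[symmetric])
       (auto intro!: integrable_continuous_interval continuous_intros Gf_cont)
  also have "\<dots> = Gf r (Suc k) w"
    by (rule integral_unique[OF Gf_FTC2[OF injk w]])
  finally show ?thesis by (simp add: S_def T)
qed

lemma hyp_prob0:
  fixes X :: "nat \<Rightarrow> 'a \<Rightarrow> real"
  assumes "0 < r 0"
    and "distributed M lborel (X 0) (\<lambda>x. ennreal (exponential_density (r 0) x))"
    and w: "0 \<le> w"
  shows "prob {\<omega>\<in>space M. w < X 0 \<omega>} = Gf r 0 w"
  using exponential_distributedD_gt[OF assms(2) w assms(1)] by (simp add: Gf_0 mult.commute)

end


definition pp :: "real \<Rightarrow> real" where "pp z = (max z 0)^2 / 2"

lemma pp_deriv: "(pp has_real_derivative max z 0) (at z)"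
proof (cases "z = 0")
  case False
  show ?thesis
  proof (cases "z > 0")
    case True
    have "((\<lambda>z. z^2/2) has_real_derivative z) (at z)"
      by (auto intro!: derivative_eq_intros)
    hence "((\<lambda>z. z^2/2) has_real_derivative max z 0) (at z)" using True by simp
    thus ?thesis
      by (rule has_field_derivative_transform_within_open[of _ _ _ "{0<..}"])
         (use True in \<open>auto simp: pp_def\<close>)
  next
    case False
    with \<open>z \<noteq> 0\<close> have z: "z < 0" by simp
    have "((\<lambda>z. 0) has_real_derivative 0) (at z)" by simp
    hence "((\<lambda>z. 0) has_real_derivative max z 0) (at z)" using z by simp
    thus ?thesis
      by (rule has_field_derivative_transform_within_open[of _ _ _ "{..<0}"])
         (use z in \<open>auto simp: pp_def\<close>)
  qed
next
  case True
  have "((\<lambda>h::real. max h 0 / 2) \<longlongrightarrow> max 0 0 / 2) (at 0)"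
    by (intro tendsto_intros) simp
  hence "((\<lambda>h. max h 0 / 2) \<longlongrightarrow> 0) (at (0::real))" by simp
  hence "((\<lambda>h. (pp (0 + h) - pp 0) / h) \<longlongrightarrow> 0) (at (0::real))"
  proof (rule Lim_transform_within[where d=1])
    fix h :: real assume "0 < dist h 0" "dist h 0 < 1"
    hence "h \<noteq> 0" by simp
    thus "max h 0 / 2 = (pp (0 + h) - pp 0) / h"
      by (cases "h > 0") (auto simp: pp_def power2_eq_square max_def)
  qed simp
  thus ?thesis using True by (simp add: has_field_derivative_iff)
qed

lemma Phi_closed:
  fixes c y w u :: real
  assumes "0 \<le> u" "w \<noteq> 0"
  shows "((\<lambda>s. c * max (y + w * s) 0) has_integral (c * (pp (y + w * u) - pp y) / w)) {0..u}"
proof -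
  have "((\<lambda>s. c * max (y + w * s) 0) has_integral (c * pp (y + w * u) / w - c * pp (y + w * 0) / w)) {0..u}"
  proof (rule fundamental_theorem_of_calculus[OF assms(1)])
    fix s assume "s \<in> {0..u}"
    have d: "((\<lambda>s. y + w * s) has_real_derivative w) (at s)"
      by (auto intro!: derivative_eq_intros)
    have "((\<lambda>s. c * pp (y + w * s) / w) has_real_derivative c * (max (y + w * s) 0 * w) / w) (at s)"
      by (intro DERIV_cdivide DERIV_cmult DERIV_chain2[OF pp_deriv d])
    hence "((\<lambda>s. c * pp (y + w * s) / w) has_real_derivative c * max (y + w * s) 0) (at s)"
      using assms(2) by simp
    thus "((\<lambda>s. c * pp (y + w * s) / w) has_vector_derivative c * max (y + w * s) 0) (at s within {0..u})"
      by (simp add: has_real_derivative_iff_has_vector_derivative[symmetric] has_field_derivative_at_within)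
  qed
  moreover have "c * pp (y + w * u) / w - c * pp (y + w * 0) / w = c * (pp (y + w * u) - pp y) / w"
    by (simp add: diff_divide_distrib right_diff_distrib)
  ultimately show ?thesis by simp
qed

lemma Phi_closed0:
  fixes c y u :: real
  assumes "0 \<le> u"
  shows "((\<lambda>s. c * max (y + 0 * s) 0) has_integral (c * max y 0 * u)) {0..u}"
  using has_integral_const_real[of "c * max y 0" 0 u] assms by (simp add: mult.commute)


definition Psi :: "real \<Rightarrow> real \<Rightarrow> real \<Rightarrow> real \<Rightarrow> real" where
  "Psi c \<alpha> \<beta> u = (if \<beta> = 0 then c * max \<alpha> 0 * u else c * (pp (\<alpha> + \<beta> * u) - pp \<alpha>) / \<beta>)"

lemma Psi_int: "0 \<le> u \<Longrightarrow> integral {0..u} (\<lambda>s. c * max (\<alpha> + \<beta> * s) 0) = Psi c \<alpha> \<beta> u"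
proof (cases "\<beta> = 0")
  case True
  assume u: "0 \<le> u"
  show ?thesis using integral_unique[OF Phi_closed0[OF u, of c \<alpha>]] True by (simp add: Psi_def)
next
  case False
  assume u: "0 \<le> u"
  show ?thesis using integral_unique[OF Phi_closed[OF u False, of c \<alpha>]] False by (simp add: Psi_def)
qed

lemma pp_mono: "a \<le> b \<Longrightarrow> pp a \<le> pp b"
  unfolding pp_def by (intro divide_right_mono power_mono) auto

lemma Psi_mono:
  assumes "0 \<le> c" "0 \<le> u" "u \<le> u'"
  shows "Psi c \<alpha> \<beta> u \<le> Psi c \<alpha> \<beta> u'"
proof (cases "\<beta> = 0")
  case True thus ?thesis using assms by (simp add: Psi_def mult_left_mono)
next
  case False
  show ?thesis
  proof (cases "\<beta> > 0")
    case True
    have "pp (\<alpha> + \<beta> * u) \<le> pp (\<alpha> + \<beta> * u')"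
      by (rule pp_mono) (use True assms in \<open>simp add: mult_left_mono\<close>)
    thus ?thesis using True assms unfolding Psi_def
      by (auto intro!: divide_right_mono mult_left_mono)
  next
    case b: False
    with False have b: "\<beta> < 0" by simp
    have "pp (\<alpha> + \<beta> * u') \<le> pp (\<alpha> + \<beta> * u)"
      by (rule pp_mono) (use b assms in \<open>simp add: mult_left_mono_neg\<close>)
    hence "c * (pp (\<alpha> + \<beta> * u') - pp \<alpha>) \<le> c * (pp (\<alpha> + \<beta> * u) - pp \<alpha>)"
      using assms by (intro mult_left_mono) auto
    thus ?thesis using b unfolding Psi_def by (auto simp: divide_le_eq_1 divide_right_mono_neg)
  qed
qed

definition ct :: "real \<Rightarrow> real \<Rightarrow> real \<Rightarrow> real \<Rightarrow> ereal" where
  "ct c \<alpha> \<beta> e = Inf {ereal u | u. 0 < u \<and> e \<le> Psi c \<alpha> \<beta> u}"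

lemma ct_nonneg: "0 \<le> ct c \<alpha> \<beta> e"
  unfolding ct_def by (rule Inf_greatest) auto

lemma ct_less_iff:
  assumes c: "0 \<le> c"
  shows "ct c \<alpha> \<beta> e < y \<longleftrightarrow> (\<exists>q\<in>\<rat>. 0 < q \<and> ereal q < y \<and> e \<le> Psi c \<alpha> \<beta> q)"
proof
  assume "ct c \<alpha> \<beta> e < y"
  then obtain s where s: "s \<in> {ereal u | u. 0 < u \<and> e \<le> Psi c \<alpha> \<beta> u}" "s < y"
    unfolding ct_def by (auto simp: Inf_less_iff)
  then obtain u where u: "s = ereal u" "0 < u" "e \<le> Psi c \<alpha> \<beta> u" by auto
  obtain q where q: "q \<in> \<rat>" "u < q" "ereal q < y"
  proof (cases y)
    case (real r)
    with s u have "u < r" by simp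
    from Rats_dense_in_real[OF this] obtain q where "q \<in> \<rat>" "u < q" "q < r" by auto
    thus ?thesis using that real by auto
  next
    case PInf
    obtain q where "q \<in> \<rat>" "u < q" "q < u + 1" using Rats_dense_in_real[of u "u+1"] by auto
    thus ?thesis using that PInf by auto
  next
    case MInf thus ?thesis using s by simp
  qed
  have "e \<le> Psi c \<alpha> \<beta> q" using u(3) Psi_mono[OF c, of u q \<alpha> \<beta>] u(2) q(2) by simp
  thus "\<exists>q\<in>\<rat>. 0 < q \<and> ereal q < y \<and> e \<le> Psi c \<alpha> \<beta> q" using q u by (intro bexI[of _ q]) auto
next
  assume "\<exists>q\<in>\<rat>. 0 < q \<and> ereal q < y \<and> e \<le> Psi c \<alpha> \<beta> q"
  then obtain q where q: "0 < q" "ereal q < y" "e \<le> Psi c \<alpha> \<beta> q" by auto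
  have "ct c \<alpha> \<beta> e \<le> ereal q" unfolding ct_def by (rule Inf_lower) (use q in auto)
  thus "ct c \<alpha> \<beta> e < y" using q(2) by simp
qed

lemma Psi_meas[measurable]:
  assumes [measurable]: "f \<in> borel_measurable M"
  shows "(\<lambda>\<omega>. Psi c (f \<omega>) \<beta> q) \<in> borel_measurable M"
  unfolding Psi_def pp_def by measurable

lemma ct_meas:
  assumes c: "0 \<le> c" and [measurable]: "f \<in> borel_measurable M" "g \<in> borel_measurable M"
  shows "(\<lambda>\<omega>. ct c (f \<omega>) \<beta> (g \<omega>)) \<in> borel_measurable M"
proof (rule borel_measurableI_less)
  fix y
  have "{\<omega>\<in>space M. ct c (f \<omega>) \<beta> (g \<omega>) < y} = (\<Union>q\<in>\<rat>. {\<omega>\<in>space M. 0 < q \<and> ereal q < y \<and> g \<omega> \<le> Psi c (f \<omega>) \<beta> q})"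
    using ct_less_iff[OF c] by auto
  also have "\<dots> \<in> sets M"
    by (intro sets.countable_UN'' countable_rat) measurable
  finally show "{\<omega>\<in>space M. ct c (f \<omega>) \<beta> (g \<omega>) < y} \<in> sets M" .
qed


definition rc :: "nat \<Rightarrow> nat \<Rightarrow> nat \<Rightarrow> (nat \<Rightarrow> real) \<Rightarrow> nat \<Rightarrow> nat \<Rightarrow> real" where
  "rc n N0 N1 v x j = (if j = x+1 \<and> x \<le> n-1 then cc n N0 N1 v x else if x = j+1 \<and> j \<le> n-1 then cc n N0 N1 v j else 0)"

definition sg :: "nat \<Rightarrow> nat \<Rightarrow> nat \<Rightarrow> real" where
  "sg n x j = (if j = x+1 \<and> x \<le> n-1 then 1 else -1)"

lemma rate_eq: "noiseless_rate n N0 N1 v x j z = rc n N0 N1 v x j * max (sg n x j * z) 0"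
  unfolding noiseless_rate_def rc_def sg_def by auto

lemma clock_eq: "clock_time v (noiseless_rate n N0 N1 v) x y j e =
    ct (rc n N0 N1 v x j) (sg n x j * y) (sg n x j * v x) e"
proof -
  have "{ereal u | u. 0 < u \<and> e \<le> integral {0..u} (\<lambda>s. noiseless_rate n N0 N1 v x j (y + v x * s))}
      = {ereal u | u. 0 < u \<and> e \<le> Psi (rc n N0 N1 v x j) (sg n x j * y) (sg n x j * v x) u}"
  proof -
    have "integral {0..u} (\<lambda>s. noiseless_rate n N0 N1 v x j (y + v x * s)) =
        Psi (rc n N0 N1 v x j) (sg n x j * y) (sg n x j * v x) u" if "0 < u" for u
    proof -
      have "integral {0..u} (\<lambda>s. noiseless_rate n N0 N1 v x j (y + v x * s)) =
         integral {0..u} (\<lambda>s. rc n N0 N1 v x j * max (sg n x j * y + sg n x j * v x * s) 0)"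
        unfolding rate_eq by (simp add: algebra_simps)
      also have "\<dots> = Psi (rc n N0 N1 v x j) (sg n x j * y) (sg n x j * v x) u"
        using that by (intro Psi_int) simp
      finally show ?thesis .
    qed
    thus ?thesis by (auto intro!: Collect_cong ex_cong)
  qed
  thus ?thesis unfolding clock_time_def ct_def by simp
qed

lemma cc_nonneg: assumes "noiseless_memory n N0 N1 v" shows "0 \<le> cc n N0 N1 v i"
proof -
  have "0 \<le> sum v {0..i}" if "i \<le> N0"
    using assms that unfolding noiseless_memory_def by (intro sum_nonneg) (auto intro: less_imp_le)
  thus ?thesis unfolding cc_def by (auto intro!: sum_nonneg)
qed

lemma rc_nonneg: assumes "noiseless_memory n N0 N1 v" shows "0 \<le> rc n N0 N1 v x j"
  using cc_nonneg[OF assms] unfolding rc_def by auto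

lemma clock_meas:
  assumes nm: "noiseless_memory n N0 N1 v" and [measurable]: "Y \<in> borel_measurable M" "g \<in> borel_measurable M"
  shows "(\<lambda>\<omega>. clock_time v (noiseless_rate n N0 N1 v) x (Y \<omega>) j (g \<omega>)) \<in> borel_measurable M"
  unfolding clock_eq by (rule ct_meas[OF rc_nonneg[OF nm]]) measurable

lemma hold_meas:
  assumes nm: "noiseless_memory n N0 N1 v"
    and X: "X \<in> measurable M (count_space UNIV)" and Y: "Y \<in> borel_measurable M"
    and e: "\<And>j. j \<le> n \<Longrightarrow> (\<lambda>\<omega>. e j \<omega>) \<in> borel_measurable M"
  shows "(\<lambda>\<omega>. hold_time n v (noiseless_rate n N0 N1 v) (X \<omega>) (Y \<omega>) (\<lambda>j. e j \<omega>)) \<in> borel_measurable M"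
proof (rule measurable_compose_countable[OF _ X])
  fix x :: nat
  show "(\<lambda>\<omega>. hold_time n v (noiseless_rate n N0 N1 v) x (Y \<omega>) (\<lambda>j. e j \<omega>)) \<in> borel_measurable M"
    unfolding hold_time_def
    by (rule borel_measurable_Min) (auto intro!: clock_meas[OF nm Y] e)
qed

lemma next_meas:
  assumes nm: "noiseless_memory n N0 N1 v"
    and X: "X \<in> measurable M (count_space UNIV)" and Y: "Y \<in> borel_measurable M"
    and e: "\<And>j. j \<le> n \<Longrightarrow> (\<lambda>\<omega>. e j \<omega>) \<in> borel_measurable M"
  shows "(\<lambda>\<omega>. next_level n v (noiseless_rate n N0 N1 v) (X \<omega>) (Y \<omega>) (\<lambda>j. e j \<omega>)) \<in> measurable M (count_space UNIV)"
proof (rule measurable_compose_countable[OF _ X])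
  fix x :: nat
  have H[measurable]: "(\<lambda>\<omega>. hold_time n v (noiseless_rate n N0 N1 v) x (Y \<omega>) (\<lambda>j. e j \<omega>)) \<in> borel_measurable M"
    using hold_meas[OF nm measurable_const Y e, of x] by simp
  have P: "Measurable.pred M (\<lambda>\<omega>. j \<le> n \<and> clock_time v (noiseless_rate n N0 N1 v) x (Y \<omega>) j (e j \<omega>) =
        hold_time n v (noiseless_rate n N0 N1 v) x (Y \<omega>) (\<lambda>j. e j \<omega>))" for j
  proof (cases "j \<le> n")
    case True
    have [measurable]: "(\<lambda>\<omega>. clock_time v (noiseless_rate n N0 N1 v) x (Y \<omega>) j (e j \<omega>)) \<in> borel_measurable M"
      by (rule clock_meas[OF nm Y e[OF True]])
    show ?thesis using True by measurable
  next
    case False thus ?thesis by simp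
  qed
  show "(\<lambda>\<omega>. next_level n v (noiseless_rate n N0 N1 v) x (Y \<omega>) (\<lambda>j. e j \<omega>)) \<in> measurable M (count_space UNIV)"
    unfolding next_level_def by (rule measurable_Least[OF P])
qed

lemma jump_chain_Suc':
  "jump_chain n v a x0 y0 e (Suc k) =
    (let T = fst (jump_chain n v a x0 y0 e k); x = fst (snd (jump_chain n v a x0 y0 e k));
         y = snd (snd (jump_chain n v a x0 y0 e k)); h = hold_time n v a x y (\<lambda>j. e j k) in
     if T = \<infinity> \<or> h = \<infinity> then (\<infinity>, x, y) else (T + h, next_level n v a x y (\<lambda>j. e j k), y + v x * real_of_ereal h))"
  by (cases "jump_chain n v a x0 y0 e k") (simp add: Let_def)

lemma chain_meas:
  assumes nm: "noiseless_memory n N0 N1 v"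
    and E: "\<And>j k. j \<le> n \<Longrightarrow> (\<lambda>\<omega>. E j k \<omega>) \<in> borel_measurable M"
  shows "(\<lambda>\<omega>. fst (jump_chain n v (noiseless_rate n N0 N1 v) x0 y0 (\<lambda>j k. E j k \<omega>) k)) \<in> borel_measurable M \<and>
    (\<lambda>\<omega>. fst (snd (jump_chain n v (noiseless_rate n N0 N1 v) x0 y0 (\<lambda>j k. E j k \<omega>) k))) \<in> measurable M (count_space UNIV) \<and>
    (\<lambda>\<omega>. snd (snd (jump_chain n v (noiseless_rate n N0 N1 v) x0 y0 (\<lambda>j k. E j k \<omega>) k))) \<in> borel_measurable M"
proof (induction k)
  case 0 thus ?case by simp
next
  case (Suc k)
  let ?a = "noiseless_rate n N0 N1 v"
  define T where "T \<omega> = fst (jump_chain n v ?a x0 y0 (\<lambda>j k. E j k \<omega>) k)" for \<omega>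
  define X where "X \<omega> = fst (snd (jump_chain n v ?a x0 y0 (\<lambda>j k. E j k \<omega>) k))" for \<omega>
  define Y where "Y \<omega> = snd (snd (jump_chain n v ?a x0 y0 (\<lambda>j k. E j k \<omega>) k))" for \<omega>
  define H where "H \<omega> = hold_time n v ?a (X \<omega>) (Y \<omega>) (\<lambda>j. E j k \<omega>)" for \<omega>
  define NL where "NL \<omega> = next_level n v ?a (X \<omega>) (Y \<omega>) (\<lambda>j. E j k \<omega>)" for \<omega>
  have [measurable]: "T \<in> borel_measurable M" "X \<in> measurable M (count_space UNIV)" "Y \<in> borel_measurable M"
    using Suc.IH unfolding T_def X_def Y_def by auto
  have [measurable]: "H \<in> borel_measurable M" unfolding H_def
    by (rule hold_meas[OF nm]) (auto intro: E)
  have [measurable]: "NL \<in> measurable M (count_space UNIV)" unfolding NL_def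
    by (rule next_meas[OF nm]) (auto intro: E)
  have VX[measurable]: "(\<lambda>\<omega>. v (X \<omega>)) \<in> borel_measurable M"
    by (rule measurable_compose_countable[where g=X]) auto
  have eq: "jump_chain n v ?a x0 y0 (\<lambda>j k. E j k \<omega>) (Suc k) =
     (if T \<omega> = \<infinity> \<or> H \<omega> = \<infinity> then (\<infinity>, X \<omega>, Y \<omega>) else (T \<omega> + H \<omega>, NL \<omega>, Y \<omega> + v (X \<omega>) * real_of_ereal (H \<omega>)))" for \<omega>
    unfolding jump_chain_Suc' T_def X_def Y_def H_def NL_def Let_def by simp
  have p[measurable]: "Measurable.pred M (\<lambda>\<omega>. T \<omega> = \<infinity> \<or> H \<omega> = \<infinity>)" by measurable
  have e1: "fst (jump_chain n v ?a x0 y0 (\<lambda>j k. E j k \<omega>) (Suc k)) = (if T \<omega> = \<infinity> \<or> H \<omega> = \<infinity> then \<infinity> else T \<omega> + H \<omega>)" for \<omega>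
    unfolding eq by simp
  have e2: "fst (snd (jump_chain n v ?a x0 y0 (\<lambda>j k. E j k \<omega>) (Suc k))) = (if T \<omega> = \<infinity> \<or> H \<omega> = \<infinity> then X \<omega> else NL \<omega>)" for \<omega>
    unfolding eq by simp
  have e3: "snd (snd (jump_chain n v ?a x0 y0 (\<lambda>j k. E j k \<omega>) (Suc k))) = (if T \<omega> = \<infinity> \<or> H \<omega> = \<infinity> then Y \<omega> else Y \<omega> + v (X \<omega>) * real_of_ereal (H \<omega>))" for \<omega>
    unfolding eq by simp
  have m1: "(\<lambda>\<omega>. if T \<omega> = \<infinity> \<or> H \<omega> = \<infinity> then \<infinity> else T \<omega> + H \<omega>) \<in> borel_measurable M"
    by (rule measurable_If[OF _ _ p[unfolded Measurable.pred_def]]) auto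
  have m2: "(\<lambda>\<omega>. if T \<omega> = \<infinity> \<or> H \<omega> = \<infinity> then X \<omega> else NL \<omega>) \<in> measurable M (count_space UNIV)"
    by (rule measurable_If[OF _ _ p[unfolded Measurable.pred_def]]) auto
  have m3: "(\<lambda>\<omega>. if T \<omega> = \<infinity> \<or> H \<omega> = \<infinity> then Y \<omega> else Y \<omega> + v (X \<omega>) * real_of_ereal (H \<omega>)) \<in> borel_measurable M"
    by (rule measurable_If[OF _ _ p[unfolded Measurable.pred_def]]) auto
  show ?case unfolding e1 e2 e3 using m1 m2 m3 by blast
qed


declare jump_chain.simps(2)[simp del]

lemma clock_nonneg: "0 \<le> clock_time v a x y j e"
  unfolding clock_time_def by (rule Inf_greatest) auto

lemma hold_nonneg: "0 \<le> hold_time n v a x y e"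
  unfolding hold_time_def by (subst Min_ge_iff) (auto simp: clock_nonneg)

context
  fixes n :: nat and v :: "nat \<Rightarrow> real" and a :: "nat \<Rightarrow> nat \<Rightarrow> real \<Rightarrow> real"
    and x0 :: nat and y0 :: real and e :: "nat \<Rightarrow> nat \<Rightarrow> real"
begin

abbreviation "TT k \<equiv> fst (jump_chain n v a x0 y0 e k)"
abbreviation "XX k \<equiv> fst (snd (jump_chain n v a x0 y0 e k))"
abbreviation "YY k \<equiv> snd (snd (jump_chain n v a x0 y0 e k))"

lemma TT_Suc_mono: "TT k \<le> TT (Suc k)"
proof -
  have "TT k \<le> TT k + hold_time n v a (XX k) (YY k) (\<lambda>j. e j k)"
    using hold_nonneg by (simp add: add_increasing2)
  thus ?thesis unfolding jump_chain_Suc'[of n v a x0 y0 e k] Let_def by auto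
qed

lemma TT_mono: "k \<le> k' \<Longrightarrow> TT k \<le> TT k'"
  by (rule lift_Suc_mono_le[of TT]) (use TT_Suc_mono in auto)

lemma TT_nonneg: "0 \<le> TT k"
  using TT_mono[of 0 k] by simp

lemma idx_piece:
  assumes "TT k \<le> ereal t" "ereal t < TT (Suc k)"
  shows "interval_index n v a x0 y0 e t = k"
  unfolding interval_index_def
proof (rule Least_equality)
  show "ereal t < TT (Suc k)" by fact
  fix k' assume k': "ereal t < TT (Suc k')"
  show "k \<le> k'"
  proof (rule ccontr)
    assume "\<not> k \<le> k'"
    hence "TT (Suc k') \<le> TT k" by (intro TT_mono) simp
    thus False using k' assms(1) by simp
  qed
qed

lemma idx_beyond:
  assumes "\<forall>k. TT (Suc k) \<le> ereal t"
  shows "interval_index n v a x0 y0 e t = (LEAST k::nat. False)"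
proof -
  have "(\<lambda>k. ereal t < TT (Suc k)) = (\<lambda>k. False)" using assms by (auto simp: not_less[symmetric])
  thus ?thesis unfolding interval_index_def by simp
qed

lemma piece_or_beyond:
  assumes "0 \<le> t"
  shows "(\<exists>k. TT k \<le> ereal t \<and> ereal t < TT (Suc k)) \<or> (\<forall>k. TT (Suc k) \<le> ereal t)"
proof (cases "\<exists>k. ereal t < TT (Suc k)")
  case True
  define k0 where "k0 = (LEAST k. ereal t < TT (Suc k))"
  have k0: "ereal t < TT (Suc k0)" unfolding k0_def using True by (metis LeastI)
  have "TT k0 \<le> ereal t"
  proof (cases k0)
    case 0 thus ?thesis using assms by simp
  next
    case (Suc k1)
    have "\<not> ereal t < TT (Suc k1)" using Suc k0_def not_less_Least[of k1 "\<lambda>k. ereal t < TT (Suc k)"] by simp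
    thus ?thesis using Suc by simp
  qed
  thus ?thesis using k0 by blast
qed (auto simp: not_less)

lemma L_piece:
  assumes "TT k \<le> ereal t" "ereal t < TT (Suc k)"
  shows "proc_L n v a x0 y0 e t = YY k + v (XX k) * (t - real_of_ereal (TT k))"
    and "proc_X n v a x0 y0 e t = XX k"
  unfolding proc_L_def proc_X_def idx_piece[OF assms]
  by (cases "jump_chain n v a x0 y0 e k"; simp)+

lemma L_beyond:
  assumes "\<forall>k. TT (Suc k) \<le> ereal t"
  shows "proc_L n v a x0 y0 e t = YY (LEAST k::nat. False) + v (XX (LEAST k::nat. False)) * (t - real_of_ereal (TT (LEAST k::nat. False)))"
    and "proc_X n v a x0 y0 e t = XX (LEAST k::nat. False)"
  unfolding proc_L_def proc_X_def idx_beyond[OF assms]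
  by (cases "jump_chain n v a x0 y0 e (LEAST k::nat. False)"; simp)+

end

lemma affine_exists:
  fixes a s Y \<beta> :: real and U :: ereal
  shows "(\<exists>t. a \<le> t \<and> ereal t < U \<and> t < s \<and> 0 \<le> Y + \<beta> * (t - a)) \<longleftrightarrow>
    (ereal a < U \<and> a < s \<and> (0 \<le> Y \<or> (0 < \<beta> \<and> a - Y/\<beta> < s \<and> ereal (a - Y/\<beta>) < U)))"
proof
  assume "\<exists>t. a \<le> t \<and> ereal t < U \<and> t < s \<and> 0 \<le> Y + \<beta> * (t - a)"
  then obtain t where t: "a \<le> t" "ereal t < U" "t < s" "0 \<le> Y + \<beta> * (t - a)" by blast
  have aU: "ereal a < U" using t(1,2) by (meson ereal_less_eq(3) order_le_less_trans)
  show "ereal a < U \<and> a < s \<and> (0 \<le> Y \<or> (0 < \<beta> \<and> a - Y/\<beta> < s \<and> ereal (a - Y/\<beta>) < U))"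
  proof (cases "0 \<le> Y")
    case True thus ?thesis using aU t by auto
  next
    case False
    hence b: "0 < \<beta> * (t - a)" using t(4) by linarith
    hence bp: "0 < \<beta>" using t(1) by (simp add: zero_less_mult_iff)
    have "- Y \<le> \<beta> * (t - a)" using t(4) by linarith
    hence "(- Y) / \<beta> \<le> t - a" by (subst pos_divide_le_eq[OF bp]) (simp add: mult.commute)
    hence r: "a - Y/\<beta> \<le> t" by simp
    have "ereal (a - Y/\<beta>) < U" using r t(2) by (meson ereal_less_eq(3) order_le_less_trans)
    thus ?thesis using aU t r bp by auto
  qed
next
  assume A: "ereal a < U \<and> a < s \<and> (0 \<le> Y \<or> (0 < \<beta> \<and> a - Y/\<beta> < s \<and> ereal (a - Y/\<beta>) < U))"
  show "\<exists>t. a \<le> t \<and> ereal t < U \<and> t < s \<and> 0 \<le> Y + \<beta> * (t - a)"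
  proof (cases "0 \<le> Y")
    case True thus ?thesis using A by (intro exI[of _ a]) auto
  next
    case False
    with A have bp: "0 < \<beta>" "a - Y/\<beta> < s" "ereal (a - Y/\<beta>) < U" by auto
    have "a \<le> a - Y/\<beta>" using False bp by (simp add: divide_nonpos_pos)
    moreover have "Y + \<beta> * ((a - Y/\<beta>) - a) = 0" using bp by simp
    ultimately show ?thesis using bp by (intro exI[of _ "a - Y/\<beta>"]) auto
  qed
qed


definition CP :: "ereal \<Rightarrow> ereal \<Rightarrow> real \<Rightarrow> real \<Rightarrow> real \<Rightarrow> bool" where
  "CP T U Y \<beta> s \<longleftrightarrow> T \<noteq> \<infinity> \<and> ereal (real_of_ereal T) < U \<and> real_of_ereal T < s \<and>
     (0 \<le> Y \<or> (0 < \<beta> \<and> real_of_ereal T - Y/\<beta> < s \<and> ereal (real_of_ereal T - Y/\<beta>) < U))"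

context
  fixes n :: nat and v :: "nat \<Rightarrow> real" and a :: "nat \<Rightarrow> nat \<Rightarrow> real \<Rightarrow> real"
    and x0 :: nat and y0 :: real and e :: "nat \<Rightarrow> nat \<Rightarrow> real"
begin

definition "SS = (SUP k. TT n v a x0 y0 e (Suc k))"

definition "CB s \<longleftrightarrow> (let c = (LEAST k::nat. False) in
   CP SS \<infinity> (YY n v a x0 y0 e c + v (XX n v a x0 y0 e c) * (real_of_ereal SS - real_of_ereal (TT n v a x0 y0 e c)))
     (v (XX n v a x0 y0 e c)) s)"

lemma H_less_iff:
  "(\<exists>t. 0 \<le> t \<and> 0 \<le> proc_L n v a x0 y0 e t \<and> t < s) \<longleftrightarrow>
   (\<exists>k. CP (TT n v a x0 y0 e k) (TT n v a x0 y0 e (Suc k)) (YY n v a x0 y0 e k) (v (XX n v a x0 y0 e k)) s) \<or> CB s"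
  (is "?L \<longleftrightarrow> ?R")
proof
  assume ?L
  then obtain t where t: "0 \<le> t" "0 \<le> proc_L n v a x0 y0 e t" "t < s" by blast
  from piece_or_beyond[OF t(1), of n v a x0 y0 e] show ?R
  proof
    assume "\<exists>k. TT n v a x0 y0 e k \<le> ereal t \<and> ereal t < TT n v a x0 y0 e (Suc k)"
    then obtain k where k: "TT n v a x0 y0 e k \<le> ereal t" "ereal t < TT n v a x0 y0 e (Suc k)" by blast
    have fin: "TT n v a x0 y0 e k \<noteq> \<infinity>" using k(1) by auto
    have fin2: "TT n v a x0 y0 e k \<noteq> -\<infinity>" using TT_nonneg[of n v a x0 y0 e k] by auto
    define A where "A = real_of_ereal (TT n v a x0 y0 e k)"
    have TA: "TT n v a x0 y0 e k = ereal A" unfolding A_def using fin fin2 by (cases "TT n v a x0 y0 e k") auto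
    have "\<exists>t. A \<le> t \<and> ereal t < TT n v a x0 y0 e (Suc k) \<and> t < s \<and>
        0 \<le> YY n v a x0 y0 e k + v (XX n v a x0 y0 e k) * (t - A)"
    proof (intro exI[of _ t] conjI)
      show "A \<le> t" using k(1) TA by simp
      show "ereal t < TT n v a x0 y0 e (Suc k)" by (rule k(2))
      show "t < s" by (rule t(3))
      show "0 \<le> YY n v a x0 y0 e k + v (XX n v a x0 y0 e k) * (t - A)"
        using t(2) L_piece(1)[OF k] unfolding A_def by simp
    qed
    hence "CP (TT n v a x0 y0 e k) (TT n v a x0 y0 e (Suc k)) (YY n v a x0 y0 e k) (v (XX n v a x0 y0 e k)) s"
      unfolding affine_exists CP_def using fin by (simp add: A_def)
    thus ?R by blast
  next
    assume B: "\<forall>k. TT n v a x0 y0 e (Suc k) \<le> ereal t"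
    define c where "c = (LEAST k::nat. False)"
    have "SS \<le> ereal t" unfolding SS_def using B by (simp add: SUP_le_iff)
    hence fin: "SS \<noteq> \<infinity>" by auto
    have "0 \<le> TT n v a x0 y0 e (Suc 0)" by (rule TT_nonneg)
    also have "\<dots> \<le> SS" unfolding SS_def by (rule SUP_upper) simp
    finally have S0: "0 \<le> SS" .
    define A where "A = real_of_ereal SS"
    have SA: "SS = ereal A" unfolding A_def using fin S0 by (cases SS) auto
    have At: "A \<le> t" using \<open>SS \<le> ereal t\<close> SA by simp
    have "\<exists>t. A \<le> t \<and> ereal t < \<infinity> \<and> t < s \<and>
        0 \<le> (YY n v a x0 y0 e c + v (XX n v a x0 y0 e c) * (A - real_of_ereal (TT n v a x0 y0 e c))) + v (XX n v a x0 y0 e c) * (t - A)"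
    proof (intro exI[of _ t] conjI)
      show "A \<le> t" "ereal t < \<infinity>" "t < s" using At t by auto
      have "proc_L n v a x0 y0 e t = YY n v a x0 y0 e c + v (XX n v a x0 y0 e c) * (t - real_of_ereal (TT n v a x0 y0 e c))"
        using L_beyond(1)[OF B] unfolding c_def .
      thus "0 \<le> (YY n v a x0 y0 e c + v (XX n v a x0 y0 e c) * (A - real_of_ereal (TT n v a x0 y0 e c))) + v (XX n v a x0 y0 e c) * (t - A)"
        using t(2) by (simp add: algebra_simps)
    qed
    hence "CB s" unfolding CB_def Let_def c_def[symmetric] affine_exists CP_def using fin by (simp add: A_def)
    thus ?R by blast
  qed
next
  assume ?R
  thus ?L
  proof
    assume "\<exists>k. CP (TT n v a x0 y0 e k) (TT n v a x0 y0 e (Suc k)) (YY n v a x0 y0 e k) (v (XX n v a x0 y0 e k)) s"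
    then obtain k where k: "CP (TT n v a x0 y0 e k) (TT n v a x0 y0 e (Suc k)) (YY n v a x0 y0 e k) (v (XX n v a x0 y0 e k)) s" by blast
    have fin: "TT n v a x0 y0 e k \<noteq> \<infinity>" using k by (simp add: CP_def)
    have fin2: "TT n v a x0 y0 e k \<noteq> -\<infinity>" using TT_nonneg[of n v a x0 y0 e k] by auto
    define A where "A = real_of_ereal (TT n v a x0 y0 e k)"
    have TA: "TT n v a x0 y0 e k = ereal A" unfolding A_def using fin fin2 by (cases "TT n v a x0 y0 e k") auto
    have A0: "0 \<le> A" using TT_nonneg[of n v a x0 y0 e k] TA by simp
    have "\<exists>t. A \<le> t \<and> ereal t < TT n v a x0 y0 e (Suc k) \<and> t < s \<and>
        0 \<le> YY n v a x0 y0 e k + v (XX n v a x0 y0 e k) * (t - A)"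
      unfolding affine_exists using k unfolding CP_def A_def by simp
    then obtain t where t: "A \<le> t" "ereal t < TT n v a x0 y0 e (Suc k)" "t < s"
        "0 \<le> YY n v a x0 y0 e k + v (XX n v a x0 y0 e k) * (t - A)" by blast
    have p: "TT n v a x0 y0 e k \<le> ereal t" using t(1) TA by simp
    have "proc_L n v a x0 y0 e t = YY n v a x0 y0 e k + v (XX n v a x0 y0 e k) * (t - A)"
      using L_piece(1)[OF p t(2)] unfolding A_def .
    thus ?L using t A0 by (intro exI[of _ t]) simp
  next
    assume "CB s"
    define c where "c = (LEAST k::nat. False)"
    have fin: "SS \<noteq> \<infinity>" using \<open>CB s\<close> by (simp add: CB_def CP_def Let_def)
    have "0 \<le> TT n v a x0 y0 e (Suc 0)" by (rule TT_nonneg)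
    also have "\<dots> \<le> SS" unfolding SS_def by (rule SUP_upper) simp
    finally have S0: "0 \<le> SS" .
    define A where "A = real_of_ereal SS"
    have SA: "SS = ereal A" unfolding A_def using fin S0 by (cases SS) auto
    have A0: "0 \<le> A" using S0 SA by simp
    have "\<exists>t. A \<le> t \<and> ereal t < \<infinity> \<and> t < s \<and>
        0 \<le> (YY n v a x0 y0 e c + v (XX n v a x0 y0 e c) * (A - real_of_ereal (TT n v a x0 y0 e c))) + v (XX n v a x0 y0 e c) * (t - A)"
      unfolding affine_exists using \<open>CB s\<close> unfolding CB_def Let_def c_def[symmetric] CP_def A_def by simp
    then obtain t where t: "A \<le> t" "t < s"
        "0 \<le> (YY n v a x0 y0 e c + v (XX n v a x0 y0 e c) * (A - real_of_ereal (TT n v a x0 y0 e c))) + v (XX n v a x0 y0 e c) * (t - A)" by blast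
    have B: "\<forall>k. TT n v a x0 y0 e (Suc k) \<le> ereal t"
    proof
      fix k
      have "TT n v a x0 y0 e (Suc k) \<le> SS" unfolding SS_def by (rule SUP_upper) simp
      also have "\<dots> \<le> ereal t" using SA t(1) by simp
      finally show "TT n v a x0 y0 e (Suc k) \<le> ereal t" .
    qed
    have "proc_L n v a x0 y0 e t = YY n v a x0 y0 e c + v (XX n v a x0 y0 e c) * (t - real_of_ereal (TT n v a x0 y0 e c))"
      using L_beyond(1)[OF B] unfolding c_def .
    hence "0 \<le> proc_L n v a x0 y0 e t" using t(3) by (simp add: algebra_simps)
    thus ?L using t A0 by (intro exI[of _ t]) simp
  qed
qed

end


lemma rev_meas:
  assumes nm: "noiseless_memory n N0 N1 v"
    and E: "\<And>j k. j \<le> n \<Longrightarrow> (\<lambda>\<omega>. E j k \<omega>) \<in> borel_measurable M"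
  shows "{\<omega>\<in>space M. reversal_at n v (noiseless_rate n N0 N1 v) x0 y0 (\<lambda>j k. E j k \<omega>) j} \<in> sets M"
proof -
  let ?a = "noiseless_rate n N0 N1 v"
  define e where "e \<omega> = (\<lambda>j k. E j k \<omega>)" for \<omega>
  have cm: "(\<lambda>\<omega>. fst (jump_chain n v ?a x0 y0 (\<lambda>j k. E j k \<omega>) k)) \<in> borel_measurable M \<and>
    (\<lambda>\<omega>. fst (snd (jump_chain n v ?a x0 y0 (\<lambda>j k. E j k \<omega>) k))) \<in> measurable M (count_space UNIV) \<and>
    (\<lambda>\<omega>. snd (snd (jump_chain n v ?a x0 y0 (\<lambda>j k. E j k \<omega>) k))) \<in> borel_measurable M" for k
    by (rule chain_meas[OF nm E])
  have Tm[measurable]: "(\<lambda>\<omega>. TT n v ?a x0 y0 (e \<omega>) k) \<in> borel_measurable M" for k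
    using cm unfolding e_def by blast
  have Xm[measurable]: "(\<lambda>\<omega>. XX n v ?a x0 y0 (e \<omega>) k) \<in> measurable M (count_space UNIV)" for k
    using cm unfolding e_def by blast
  have Ym[measurable]: "(\<lambda>\<omega>. YY n v ?a x0 y0 (e \<omega>) k) \<in> borel_measurable M" for k
    using cm unfolding e_def by blast
  have Vm[measurable]: "(\<lambda>\<omega>. v (XX n v ?a x0 y0 (e \<omega>) k)) \<in> borel_measurable M" for k
    by (rule measurable_compose_countable[where g="\<lambda>\<omega>. XX n v ?a x0 y0 (e \<omega>) k"]) auto
  have SSm[measurable]: "(\<lambda>\<omega>. SS n v ?a x0 y0 (e \<omega>)) \<in> borel_measurable M"
    unfolding SS_def by measurable
  have CPm: "Measurable.pred M (\<lambda>\<omega>. CP (TT n v ?a x0 y0 (e \<omega>) k) (TT n v ?a x0 y0 (e \<omega>) (Suc k))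
      (YY n v ?a x0 y0 (e \<omega>) k) (v (XX n v ?a x0 y0 (e \<omega>) k)) s)" for k s
    unfolding CP_def by measurable
  have CBm: "Measurable.pred M (\<lambda>\<omega>. CB n v ?a x0 y0 (e \<omega>) s)" for s
    unfolding CB_def CP_def Let_def by measurable
  define Hs where "Hs \<omega> s \<longleftrightarrow> (\<exists>t. 0 \<le> t \<and> 0 \<le> proc_L n v ?a x0 y0 (e \<omega>) t \<and> t < s)" for \<omega> s
  have Hsm[measurable]: "Measurable.pred M (\<lambda>\<omega>. Hs \<omega> s)" for s
  proof -
    have "Hs \<omega> s \<longleftrightarrow> (\<exists>k. CP (TT n v ?a x0 y0 (e \<omega>) k) (TT n v ?a x0 y0 (e \<omega>) (Suc k))
      (YY n v ?a x0 y0 (e \<omega>) k) (v (XX n v ?a x0 y0 (e \<omega>) k)) s) \<or> CB n v ?a x0 y0 (e \<omega>) s" for \<omega>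
      unfolding Hs_def by (rule H_less_iff)
    hence eq: "(\<lambda>\<omega>. Hs \<omega> s) = (\<lambda>\<omega>. (\<exists>k. CP (TT n v ?a x0 y0 (e \<omega>) k) (TT n v ?a x0 y0 (e \<omega>) (Suc k))
      (YY n v ?a x0 y0 (e \<omega>) k) (v (XX n v ?a x0 y0 (e \<omega>) k)) s) \<or> CB n v ?a x0 y0 (e \<omega>) s)" by auto
    show ?thesis unfolding eq using CPm CBm by measurable
  qed
  define Ne where "Ne \<omega> \<longleftrightarrow> (\<exists>t\<ge>0. 0 \<le> proc_L n v ?a x0 y0 (e \<omega>) t)" for \<omega>
  have Ne_eq: "Ne \<omega> \<longleftrightarrow> (\<exists>N::nat. Hs \<omega> (real N))" for \<omega>
    unfolding Ne_def Hs_def by (meson reals_Archimedean2)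
  have Nem[measurable]: "Measurable.pred M Ne" unfolding Ne_eq[abs_def] by measurable
  define \<tau> where "\<tau> \<omega> = Inf {t. 0 \<le> t \<and> 0 \<le> proc_L n v ?a x0 y0 (e \<omega>) t}" for \<omega>
  have \<tau>m[measurable]: "\<tau> \<in> borel_measurable M"
  proof (rule borel_measurableI_less)
    fix s
    have "\<tau> \<omega> < s \<longleftrightarrow> (Ne \<omega> \<and> Hs \<omega> s) \<or> (\<not> Ne \<omega> \<and> Inf ({}::real set) < s)" for \<omega>
    proof (cases "Ne \<omega>")
      case True
      hence ne: "{t. 0 \<le> t \<and> 0 \<le> proc_L n v ?a x0 y0 (e \<omega>) t} \<noteq> {}" unfolding Ne_def by auto
      have bd: "bdd_below {t. 0 \<le> t \<and> 0 \<le> proc_L n v ?a x0 y0 (e \<omega>) t}"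
        by (rule bdd_belowI[of _ 0]) auto
      show ?thesis using True unfolding \<tau>_def Hs_def cInf_less_iff[OF ne bd] by auto
    next
      case False
      hence em: "{t. 0 \<le> t \<and> 0 \<le> proc_L n v ?a x0 y0 (e \<omega>) t} = {}" unfolding Ne_def by auto
      show ?thesis using False unfolding \<tau>_def em by simp
    qed
    hence "{\<omega>\<in>space M. \<tau> \<omega> < s} = {\<omega>\<in>space M. (Ne \<omega> \<and> Hs \<omega> s) \<or> (\<not> Ne \<omega> \<and> Inf ({}::real set) < s)}" by auto
    also have "\<dots> \<in> sets M" by measurable
    finally show "{\<omega>\<in>space M. \<tau> \<omega> < s} \<in> sets M" .
  qed
  define idx where "idx \<omega> = interval_index n v ?a x0 y0 (e \<omega>) (\<tau> \<omega>)" for \<omega>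
  have idxm[measurable]: "idx \<in> measurable M (count_space UNIV)"
    unfolding idx_def interval_index_def by measurable
  have PXm: "(\<lambda>\<omega>. XX n v ?a x0 y0 (e \<omega>) (idx \<omega>)) \<in> measurable M (count_space UNIV)"
    by (rule measurable_compose_countable[OF _ idxm]) auto
  have eq: "{\<omega>\<in>space M. reversal_at n v ?a x0 y0 (\<lambda>j k. E j k \<omega>) j} =
      {\<omega>\<in>space M. Ne \<omega> \<and> XX n v ?a x0 y0 (e \<omega>) (idx \<omega>) = j}"
    unfolding reversal_at_def Ne_def idx_def \<tau>_def proc_X_def e_def by simp
  show ?thesis unfolding eq using PXm by measurable
qed


lemma ct_exact:
  assumes "0 < t" "e \<le> Psi c \<alpha> \<beta> t" "\<And>u. 0 < u \<Longrightarrow> e \<le> Psi c \<alpha> \<beta> u \<Longrightarrow> t \<le> u"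
  shows "ct c \<alpha> \<beta> e = ereal t"
  unfolding ct_def
proof (rule antisym)
  show "Inf {ereal u |u. 0 < u \<and> e \<le> Psi c \<alpha> \<beta> u} \<le> ereal t" by (rule Inf_lower) (use assms in auto)
  show "ereal t \<le> Inf {ereal u |u. 0 < u \<and> e \<le> Psi c \<alpha> \<beta> u}" by (rule Inf_greatest) (use assms in auto)
qed

lemma ct_inf:
  assumes "\<And>u. 0 < u \<Longrightarrow> Psi c \<alpha> \<beta> u < e"
  shows "ct c \<alpha> \<beta> e = \<infinity>"
proof -
  have em: "{ereal u |u. 0 < u \<and> e \<le> Psi c \<alpha> \<beta> u} = {}" using assms by force
  show ?thesis unfolding ct_def em by (simp add: top_ereal_def)
qed

lemma ct_zero: "0 < e \<Longrightarrow> ct 0 \<alpha> \<beta> e = \<infinity>"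
  by (rule ct_inf) (simp add: Psi_def)

lemma ct_up:
  assumes c: "0 < c" and w: "0 < w" and y: "y \<le> 0" and e: "0 < e"
  shows "ct c y w e = ereal ((sqrt (2 * e * w / c) - y) / w)"
proof (rule ct_exact)
  define q where "q = sqrt (2 * e * w / c)"
  have q0: "0 < q" unfolding q_def using c w e by simp
  have qq: "q^2 = 2 * e * w / c" unfolding q_def using c w e by simp
  have ppy: "pp y = 0" using y by (simp add: pp_def)
  have P: "Psi c y w u = c * pp (y + w * u) / w" for u using w ppy by (simp add: Psi_def)
  show "0 < (q - y) / w" using q0 y w by simp
  have "y + w * ((q - y) / w) = q" using w by simp
  hence "Psi c y w ((q - y) / w) = c * (q^2/2) / w" unfolding P pp_def using q0 by simp
  also have "\<dots> = e" unfolding qq using c w by simp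
  finally show "e \<le> Psi c y w ((q - y) / w)" by simp
  fix u assume u: "0 < u" "e \<le> Psi c y w u"
  hence "e * w / c \<le> pp (y + w * u)" unfolding P using c w by (simp add: field_simps)
  hence "q^2 \<le> (max (y + w*u) 0)^2" unfolding qq pp_def by (simp add: field_simps)
  hence "q \<le> max (y + w*u) 0" using q0 by (simp add: power2_le_iff_abs_le)
  hence "q \<le> y + w * u" using q0 by (simp add: max_def split: if_splits)
  thus "(q - y) / w \<le> u" using w by (simp add: field_simps)
qed

lemma ct_down_fire:
  assumes c: "0 < c" and w: "0 < w" and y: "y < 0" and e: "0 < e" and le: "e * w / c \<le> y^2/2"
  shows "ct c (- y) (- w) e = ereal ((- y - sqrt (y^2 - 2 * (e * w / c))) / w)"
proof (rule ct_exact)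
  define q where "q = sqrt (y^2 - 2 * (e * w / c))"
  have h: "0 \<le> y^2 - 2 * (e * w / c)" using le by linarith
  have q0: "0 \<le> q" unfolding q_def using h by simp
  have qq: "q^2 = y^2 - 2 * (e * w / c)" unfolding q_def using h by simp
  have ewc: "0 < e * w / c" using e w c by simp
  have qy: "q < - y"
  proof -
    have "q^2 < \<bar>y\<bar>^2" using qq ewc by simp
    hence "q < \<bar>y\<bar>" by (rule power_less_imp_less_base) simp
    thus ?thesis using y by simp
  qed
  have P: "Psi c (-y) (-w) u = c * (pp (-y) - pp (-y - w * u)) / w" for u
    using w by (simp add: Psi_def field_simps)
  show "0 < (- y - q) / w" using qy w by simp
  have "- y - w * ((- y - q) / w) = q" using w by simp
  hence "Psi c (-y) (-w) ((- y - q) / w) = c * (y^2/2 - q^2/2) / w" unfolding P pp_def using q0 y by simp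
  also have "\<dots> = e" unfolding qq using c w by (simp add: field_simps)
  finally show "e \<le> Psi c (-y) (-w) ((- y - q) / w)" by simp
  fix u assume u: "0 < u" "e \<le> Psi c (-y) (-w) u"
  hence "e * w / c \<le> pp (-y) - pp (-y - w * u)" unfolding P using c w by (simp add: field_simps)
  hence "(max (-y - w*u) 0)^2 \<le> q^2" unfolding qq pp_def using y by (simp add: field_simps)
  hence "max (-y - w*u) 0 \<le> q" using q0 by (simp add: power2_le_iff_abs_le)
  hence "-y - w * u \<le> q" by simp
  thus "(- y - q) / w \<le> u" using w by (simp add: field_simps)
qed

lemma ct_down_nofire:
  assumes c: "0 < c" and w: "0 < w" and e: "0 < e" and gt: "y^2/2 < e * w / c"
  shows "ct c (- y) (- w) e = \<infinity>"
proof (rule ct_inf)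
  fix u :: real assume "0 < u"
  have "Psi c (-y) (-w) u = c * (pp (-y) - pp (-y - w * u)) / w"
    using w by (simp add: Psi_def field_simps)
  also have "\<dots> \<le> c * pp (-y) / w"
    using c w by (intro divide_right_mono mult_left_mono) (auto simp: pp_def)
  also have "\<dots> \<le> c * (y^2/2) / w"
  proof -
    have mx: "(max (-y) 0)^2 \<le> y^2" by (cases "y \<le> 0") (auto simp: max_def)
    show ?thesis using c w mx by (intro divide_right_mono mult_left_mono) (auto simp: pp_def)
  qed
  also have "\<dots> < e" using gt c w by (simp add: field_simps)
  finally show "Psi c (-y) (-w) u < e" .
qed


context
  fixes n N0 N1 :: nat and v :: "nat \<Rightarrow> real"
  assumes nm: "noiseless_memory n N0 N1 v" and N0: "1 \<le> N0"
begin

lemma N0n: "2 * N0 < n" using nm by (simp add: noiseless_memory_def)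

lemma vpos: "x \<le> N0 \<Longrightarrow> 0 < v x" using nm by (simp add: noiseless_memory_def)

lemma ccpos: "x \<le> N0 \<Longrightarrow> 0 < cc n N0 N1 v x"
proof -
  assume x: "x \<le> N0"
  have "0 < sum v {0..x}" by (rule sum_pos) (use x vpos in auto)
  thus ?thesis using x by (simp add: cc_def)
qed

lemma mu_eq: "1 \<le> x \<Longrightarrow> x \<le> N0 \<Longrightarrow> mu n N0 N1 v (x - 1) = v x / cc n N0 N1 v (x - 1)"
  by (simp add: mu_def)

lemma mupos: "i < N0 \<Longrightarrow> 0 < mu n N0 N1 v i"
  unfolding mu_def using vpos[of "i+1"] ccpos[of i] by simp

abbreviation "aa \<equiv> noiseless_rate n N0 N1 v"

lemma clock_up:
  assumes "x \<le> N0" "y \<le> 0" "0 < E"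
  shows "clock_time v aa x y (x+1) E = ereal ((sqrt (2 * E * v x / cc n N0 N1 v x) - y) / v x)"
proof -
  have "x \<le> n - 1" using assms N0n by simp
  hence "rc n N0 N1 v x (x+1) = cc n N0 N1 v x" "sg n x (x+1) = 1" by (auto simp: rc_def sg_def)
  thus ?thesis unfolding clock_eq using ct_up[OF ccpos[OF assms(1)] vpos[OF assms(1)] assms(2,3)] by simp
qed

lemma clock_down_eq:
  assumes "x \<le> N0" "1 \<le> x"
  shows "clock_time v aa x y (x-1) E = ct (cc n N0 N1 v (x-1)) (- y) (- v x) E"
proof -
  have "x - 1 \<noteq> x + 1" by simp
  moreover have "x - 1 \<le> n - 1" using assms N0n by simp
  ultimately have "rc n N0 N1 v x (x-1) = cc n N0 N1 v (x-1)" "sg n x (x-1) = -1"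
    using assms by (auto simp: rc_def sg_def)
  thus ?thesis unfolding clock_eq by simp
qed

lemma clock_other:
  assumes "j \<noteq> x + 1" "j + 1 \<noteq> x" "0 < E"
  shows "clock_time v aa x y j E = \<infinity>"
proof -
  have "rc n N0 N1 v x j = 0" using assms by (auto simp: rc_def)
  thus ?thesis unfolding clock_eq using ct_zero[OF assms(3)] by simp
qed

lemma hold_down:
  assumes x: "x \<le> N0" "1 \<le> x" and y: "y < 0" and ep: "\<And>j. j \<le> n \<Longrightarrow> 0 < e' j"
    and le: "e' (x-1) * mu n N0 N1 v (x-1) \<le> y^2/2"
  defines "td \<equiv> (- y - sqrt (y^2 - 2 * (e' (x-1) * mu n N0 N1 v (x-1)))) / v x"
  shows "hold_time n v aa x y e' = ereal td" "next_level n v aa x y e' = x - 1"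
    "y + v x * td = - sqrt (y^2 - 2 * (e' (x-1) * mu n N0 N1 v (x-1)))"
proof -
  have xn: "x + 1 \<le> n" using x N0n by simp
  have c: "0 < cc n N0 N1 v (x-1)" using ccpos x by simp
  have w: "0 < v x" using vpos x by simp
  have E: "0 < e' (x-1)" using ep xn by simp
  have muq: "e' (x-1) * v x / cc n N0 N1 v (x-1) = e' (x-1) * mu n N0 N1 v (x-1)"
    using mu_eq[OF x(2,1)] by simp
  have dn: "clock_time v aa x y (x-1) (e' (x-1)) = ereal td"
  proof -
    have le': "e' (x-1) * v x / cc n N0 N1 v (x-1) \<le> y^2/2" using le muq by simp
    have "ct (cc n N0 N1 v (x-1)) (- y) (- v x) (e' (x-1)) =
       ereal ((- y - sqrt (y^2 - 2 * (e' (x-1) * v x / cc n N0 N1 v (x-1)))) / v x)"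
      by (rule ct_down_fire[OF c w y E le'])
    thus ?thesis unfolding clock_down_eq[OF x] td_def muq .
  qed
  have up: "clock_time v aa x y (x+1) (e' (x+1)) = ereal ((sqrt (2 * e' (x+1) * v x / cc n N0 N1 v x) - y) / v x)"
    by (rule clock_up) (use x y ep xn in auto)
  have "0 \<le> sqrt (y^2 - 2 * (e' (x-1) * mu n N0 N1 v (x-1))) / v x"
    using w le by (intro divide_nonneg_pos) (auto simp: field_simps)
  hence "td \<le> - y / v x" unfolding td_def by (simp add: diff_divide_distrib)
  also have "\<dots> \<le> (sqrt (2 * e' (x+1) * v x / cc n N0 N1 v x) - y) / v x"
  proof -
    have "0 \<le> sqrt (2 * e' (x+1) * v x / cc n N0 N1 v x) / v x"
      using w ep[OF xn] ccpos[OF x(1)] by (intro divide_nonneg_pos) auto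
    thus ?thesis by (simp add: diff_divide_distrib)
  qed
  finally have tdu: "td \<le> (sqrt (2 * e' (x+1) * v x / cc n N0 N1 v x) - y) / v x" .
  have oth: "j \<noteq> x + 1 \<Longrightarrow> j \<noteq> x - 1 \<Longrightarrow> j \<le> n \<Longrightarrow> clock_time v aa x y j (e' j) = \<infinity>" for j
    by (rule clock_other) (use x ep in auto)
  have all: "j \<le> n \<Longrightarrow> ereal td \<le> clock_time v aa x y j (e' j)" for j
    using dn up tdu oth by (cases "j = x + 1"; cases "j = x - 1") auto
  show H: "hold_time n v aa x y e' = ereal td"
    unfolding hold_time_def
    by (rule Min_eqI) (use all dn x N0n in \<open>auto intro!: image_eqI[of _ _ "x-1"]\<close>)
  show "next_level n v aa x y e' = x - 1"
    unfolding next_level_def H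
  proof (rule Least_equality)
    show "x - 1 \<le> n \<and> clock_time v aa x y (x - 1) (e' (x - 1)) = ereal td" using dn x N0n by simp
    fix j assume j: "j \<le> n \<and> clock_time v aa x y j (e' j) = ereal td"
    show "x - 1 \<le> j"
    proof (rule ccontr)
      assume "\<not> x - 1 \<le> j"
      hence "j \<noteq> x + 1" "j \<noteq> x - 1" by auto
      thus False using oth[of j] j by simp
    qed
  qed
  have "y^2 - 2 * (e' (x-1) * mu n N0 N1 v (x-1)) \<ge> 0" using le by linarith
  show "y + v x * td = - sqrt (y^2 - 2 * (e' (x-1) * mu n N0 N1 v (x-1)))"
    unfolding td_def using w by (simp add: field_simps)
qed

lemma hold_final:
  assumes x: "x \<le> N0" and y: "y \<le> 0" and ep: "\<And>j. j \<le> n \<Longrightarrow> 0 < e' j"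
    and nf: "x = 0 \<or> y^2/2 < e' (x-1) * mu n N0 N1 v (x-1)"
  shows "\<exists>h. hold_time n v aa x y e' = ereal h \<and> - y / v x < h"
proof -
  have xn: "x + 1 \<le> n" using x N0n by simp
  have w: "0 < v x" using vpos x by simp
  define h where "h = (sqrt (2 * e' (x+1) * v x / cc n N0 N1 v x) - y) / v x"
  have up: "clock_time v aa x y (x+1) (e' (x+1)) = ereal h"
    unfolding h_def by (rule clock_up) (use x y ep xn in auto)
  have "0 < sqrt (2 * e' (x+1) * v x / cc n N0 N1 v x)" using ep[OF xn] w ccpos[OF x] by simp
  hence "0 < sqrt (2 * e' (x+1) * v x / cc n N0 N1 v x) / v x" using w by simp
  hence hgt: "- y / v x < h" unfolding h_def by (simp add: diff_divide_distrib)
  have dn: "clock_time v aa x y (x-1) (e' (x-1)) = \<infinity>" if "1 \<le> x"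
  proof -
    have c: "0 < cc n N0 N1 v (x-1)" using ccpos x by simp
    have muq: "e' (x-1) * v x / cc n N0 N1 v (x-1) = e' (x-1) * mu n N0 N1 v (x-1)"
      using mu_eq[OF that x] by simp
    have "y^2/2 < e' (x-1) * mu n N0 N1 v (x-1)" using nf that by auto
    hence g: "y^2/2 < e' (x-1) * v x / cc n N0 N1 v (x-1)" using muq by simp
    have E: "0 < e' (x-1)" using ep[of "x-1"] xn by simp
    show ?thesis unfolding clock_down_eq[OF x that] by (rule ct_down_nofire[OF c w E g])
  qed
  have oth: "j \<noteq> x + 1 \<Longrightarrow> j + 1 \<noteq> x \<Longrightarrow> j \<le> n \<Longrightarrow> clock_time v aa x y j (e' j) = \<infinity>" for j
    by (rule clock_other) (use ep in auto)
  have all: "j \<le> n \<Longrightarrow> ereal h \<le> clock_time v aa x y j (e' j)" for j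
  proof (cases "j = x + 1")
    case True thus ?thesis using up by simp
  next
    case False
    assume jn: "j \<le> n"
    show ?thesis
    proof (cases "j + 1 = x")
      case True
      hence "j = x - 1" "1 \<le> x" by auto
      thus ?thesis using dn by simp
    qed (use oth False jn in simp)
  qed
  have "hold_time n v aa x y e' = ereal h"
    unfolding hold_time_def
    by (rule Min_eqI) (use all up xn in \<open>auto intro!: image_eqI[of _ _ "x+1"]\<close>)
  thus ?thesis using hgt by blast
qed

end


definition ZZ :: "nat \<Rightarrow> nat \<Rightarrow> nat \<Rightarrow> (nat \<Rightarrow> real) \<Rightarrow> (nat \<Rightarrow> nat \<Rightarrow> real) \<Rightarrow> nat \<Rightarrow> real" where
  "ZZ n N0 N1 v e m = (\<Sum>i<m. mu n N0 N1 v (N0-1-i) * e (N0-1-i) i)"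

lemma step_generic:
  assumes "TT n v a x0 y0 e k \<noteq> \<infinity>" "TT n v a x0 y0 e (Suc k) \<noteq> \<infinity>"
  shows "\<exists>h. TT n v a x0 y0 e (Suc k) = TT n v a x0 y0 e k + ereal h \<and>
     YY n v a x0 y0 e (Suc k) = YY n v a x0 y0 e k + v (XX n v a x0 y0 e k) * h"
proof -
  define H where "H = hold_time n v a (XX n v a x0 y0 e k) (YY n v a x0 y0 e k) (\<lambda>j. e j k)"
  have H0: "0 \<le> H" unfolding H_def by (rule hold_nonneg)
  have eq: "jump_chain n v a x0 y0 e (Suc k) = (if TT n v a x0 y0 e k = \<infinity> \<or> H = \<infinity> then (\<infinity>, XX n v a x0 y0 e k, YY n v a x0 y0 e k)
     else (TT n v a x0 y0 e k + H, next_level n v a (XX n v a x0 y0 e k) (YY n v a x0 y0 e k) (\<lambda>j. e j k),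
       YY n v a x0 y0 e k + v (XX n v a x0 y0 e k) * real_of_ereal H))"
    unfolding jump_chain_Suc'[of n v a x0 y0 e k] Let_def H_def by simp
  have Hf: "H \<noteq> \<infinity>" using assms eq by (auto split: if_splits)
  have HH: "H = ereal (real_of_ereal H)" using Hf H0 by (cases H) auto
  show ?thesis using assms Hf eq HH by (intro exI[of _ "real_of_ereal H"]) (auto split: if_splits)
qed

context
  fixes n N0 N1 :: nat and v :: "nat \<Rightarrow> real" and l :: real and e :: "nat \<Rightarrow> nat \<Rightarrow> real"
  assumes nm: "noiseless_memory n N0 N1 v" and N0: "1 \<le> N0" and l: "l < 0"
    and ep: "\<And>j k. j \<le> n \<Longrightarrow> 0 < e j k"
begin

abbreviation "Z \<equiv> ZZ n N0 N1 v e"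
abbreviation "W0 \<equiv> l^2/2"
abbreviation "T' \<equiv> TT n v (aa n N0 N1 v) N0 l e"
abbreviation "X' \<equiv> XX n v (aa n N0 N1 v) N0 l e"
abbreviation "Y' \<equiv> YY n v (aa n N0 N1 v) N0 l e"

lemma N0n': "2 * N0 < n" using nm by (simp add: noiseless_memory_def)

lemma Z_Suc: "Z (Suc m) = Z m + mu n N0 N1 v (N0-1-m) * e (N0-1-m) m"
  by (simp add: ZZ_def)

lemma Z_term_pos: "m < N0 \<Longrightarrow> 0 < mu n N0 N1 v (N0-1-m) * e (N0-1-m) m"
  using mupos[OF nm N0, of "N0-1-m"] ep[of "N0-1-m" m] N0n' by simp

lemma Z_mono: "k \<le> m \<Longrightarrow> m \<le> N0 \<Longrightarrow> Z k \<le> Z m"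
proof (induction m)
  case 0 thus ?case by simp
next
  case (Suc m)
  show ?case
  proof (cases "k = Suc m")
    case False
    hence "Z k \<le> Z m" using Suc by simp
    also have "\<dots> \<le> Z (Suc m)" using Z_term_pos[of m] Suc.prems by (simp add: Z_Suc)
    finally show ?thesis .
  qed simp
qed

lemma chain_shape:
  "m \<le> N0 \<Longrightarrow> Z m \<le> W0 \<Longrightarrow> T' m \<noteq> \<infinity> \<and> X' m = N0 - m \<and> Y' m = - sqrt (2 * (W0 - Z m))"
proof (induction m)
  case 0
  have "sqrt (2 * (l^2/2)) = - l" using l by simp
  thus ?case by (simp add: ZZ_def)
next
  case (Suc m)
  have mN: "m < N0" using Suc.prems by simp
  have zlt: "Z m < Z (Suc m)" using Z_term_pos[OF mN] by (simp add: Z_Suc)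
  have IH: "T' m \<noteq> \<infinity>" "X' m = N0 - m" "Y' m = - sqrt (2 * (W0 - Z m))"
    using Suc.IH Suc.prems zlt by auto
  define x where "x = N0 - m"
  define y where "y = - sqrt (2 * (W0 - Z m))"
  have x: "x \<le> N0" "1 \<le> x" using mN unfolding x_def by auto
  have y: "y < 0" unfolding y_def using zlt Suc.prems by simp
  have yy: "y^2/2 = W0 - Z m" unfolding y_def using zlt Suc.prems by simp
  have xm: "x - 1 = N0 - 1 - m" unfolding x_def by simp
  have ep': "\<And>j. j \<le> n \<Longrightarrow> 0 < e j m" using ep by simp
  have le: "e (x-1) m * mu n N0 N1 v (x-1) \<le> y^2/2"
    using Suc.prems unfolding yy xm by (simp add: Z_Suc mult.commute)
  note HD = hold_down[OF nm N0 x y, where e'="\<lambda>j. e j m", OF ep' le]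
  have HD1: "hold_time n v (aa n N0 N1 v) x y (\<lambda>j. e j m) =
     ereal ((- y - sqrt (y\<^sup>2 - 2 * (e (x - 1) m * mu n N0 N1 v (x - 1)))) / v x)"
    using HD(1) by simp
  have HD2: "next_level n v (aa n N0 N1 v) x y (\<lambda>j. e j m) = x - 1" using HD(2) by simp
  have HD3: "y + v x * ((- y - sqrt (y\<^sup>2 - 2 * (e (x - 1) m * mu n N0 N1 v (x - 1)))) / v x) =
      - sqrt (y\<^sup>2 - 2 * (e (x - 1) m * mu n N0 N1 v (x - 1)))" using HD(3) by simp
  have eq: "jump_chain n v (aa n N0 N1 v) N0 l e (Suc m) =
     (T' m + ereal ((- y - sqrt (y\<^sup>2 - 2 * (e (x - 1) m * mu n N0 N1 v (x - 1)))) / v x), x - 1,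
      - sqrt (y\<^sup>2 - 2 * (e (x - 1) m * mu n N0 N1 v (x - 1))))"
    unfolding jump_chain_Suc'[of n v "aa n N0 N1 v" N0 l e m] Let_def IH(2,3)[folded x_def y_def]
    using IH(1) HD1 HD2 HD3 by simp
  have "y\<^sup>2 - 2 * (e (x - 1) m * mu n N0 N1 v (x - 1)) = 2 * (W0 - Z (Suc m))"
    using yy unfolding xm by (simp add: Z_Suc algebra_simps)
  moreover have "x - 1 = N0 - Suc m" unfolding x_def by simp
  ultimately show ?case unfolding eq using IH(1) by auto
qed

end


context
  fixes n N0 N1 :: nat and v :: "nat \<Rightarrow> real" and l :: real and e :: "nat \<Rightarrow> nat \<Rightarrow> real"
  assumes nm: "noiseless_memory n N0 N1 v" and N0: "1 \<le> N0" and l: "l < 0"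
    and ep: "\<And>j k. j \<le> n \<Longrightarrow> 0 < e j k"
begin

abbreviation "Zq \<equiv> ZZ n N0 N1 v e"
abbreviation "Wq \<equiv> l^2/2"
abbreviation "Tq \<equiv> TT n v (aa n N0 N1 v) N0 l e"
abbreviation "Xq \<equiv> XX n v (aa n N0 N1 v) N0 l e"
abbreviation "Yq \<equiv> YY n v (aa n N0 N1 v) N0 l e"
abbreviation "Lq \<equiv> proc_L n v (aa n N0 N1 v) N0 l e"

lemma cs: "m \<le> N0 \<Longrightarrow> Zq m \<le> Wq \<Longrightarrow> Tq m \<noteq> \<infinity> \<and> Xq m = N0 - m \<and> Yq m = - sqrt (2 * (Wq - Zq m))"
  by (rule chain_shape[OF nm N0 l]) (auto intro: ep)
lemma Zm: "k \<le> m \<Longrightarrow> m \<le> N0 \<Longrightarrow> Zq k \<le> Zq m"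
  by (rule Z_mono[OF nm N0 l]) (auto intro: ep)
lemma ZS: "Zq (Suc m) = Zq m + mu n N0 N1 v (N0-1-m) * e (N0-1-m) m"
  by (simp add: ZZ_def)

lemma rev_char:
  assumes m: "m \<le> N0" "Zq m \<le> Wq" "m = N0 \<or> Wq < Zq (Suc m)"
  shows "reversal_at n v (aa n N0 N1 v) N0 l e j \<longleftrightarrow> j = N0 - m"
proof -
  have S: "Tq m \<noteq> \<infinity>" "Xq m = N0 - m" "Yq m = - sqrt (2 * (Wq - Zq m))" using cs[OF m(1,2)] by auto
  define x where "x = N0 - m"
  define y where "y = - sqrt (2 * (Wq - Zq m))"
  have x: "x \<le> N0" unfolding x_def by simp
  have w: "0 < v x" using vpos[OF nm N0 x] .
  have y: "y \<le> 0" unfolding y_def using m by simp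
  have yy: "y^2/2 = Wq - Zq m" unfolding y_def using m by simp
  have ep': "\<And>j. j \<le> n \<Longrightarrow> 0 < e j m" using ep by simp
  have nf: "x = 0 \<or> y^2/2 < e (x-1) m * mu n N0 N1 v (x-1)"
  proof (cases "m = N0")
    case True thus ?thesis unfolding x_def by simp
  next
    case False
    hence "Wq < Zq (Suc m)" using m by simp
    moreover have "x - 1 = N0 - 1 - m" unfolding x_def by simp
    ultimately show ?thesis unfolding yy using False by (simp add: ZS mult.commute)
  qed
  obtain h where h: "hold_time n v (aa n N0 N1 v) x y (\<lambda>j. e j m) = ereal h" "- y / v x < h"
    using hold_final[OF nm N0 x y, where e'="\<lambda>j. e j m", OF ep' nf] by blast
  have T0: "0 \<le> Tq m" by (rule TT_nonneg)
  define Tm where "Tm = real_of_ereal (Tq m)"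
  have TmE: "Tq m = ereal Tm" unfolding Tm_def using S(1) T0 by (cases "Tq m") auto
  have Tm0: "0 \<le> Tm" using T0 TmE by simp
  have TS: "Tq (Suc m) = ereal (Tm + h)"
    unfolding jump_chain_Suc'[of n v "aa n N0 N1 v" N0 l e m] Let_def
    using S(1) h(1) TmE S(2,3) x_def y_def by simp
  define r where "r = Tm + (- y) / v x"
  have yw: "0 \<le> - y / v x" using y w by (intro divide_nonneg_pos) auto
  have rlt: "r < Tm + h" unfolding r_def using h(2) by simp
  have piece_r: "Tq m \<le> ereal r" "ereal r < Tq (Suc m)" using TmE TS yw rlt unfolding r_def by auto
  have Lr: "Lq r = 0"
    using L_piece(1)[OF piece_r] S TmE w unfolding r_def x_def[symmetric] y_def[symmetric] by simp
  have Xr: "proc_X n v (aa n N0 N1 v) N0 l e r = N0 - m" using L_piece(2)[OF piece_r] S by simp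
  have r0: "0 \<le> r" unfolding r_def using Tm0 yw by simp
  define HS where "HS = {t. 0 \<le> t \<and> 0 \<le> Lq t}"
  have rH: "r \<in> HS" unfolding HS_def using r0 Lr by simp
  have lower: "r \<le> t" if t: "t \<in> HS" for t
  proof -
    from t have t0: "0 \<le> t" and Lt: "0 \<le> Lq t" unfolding HS_def by auto
    from piece_or_beyond[OF t0, of n v "aa n N0 N1 v" N0 l e] show ?thesis
    proof
      assume "\<exists>k. Tq k \<le> ereal t \<and> ereal t < Tq (Suc k)"
      then obtain k where k: "Tq k \<le> ereal t" "ereal t < Tq (Suc k)" by blast
      show ?thesis
      proof (cases k m rule: linorder_cases)
        case less
        have SK: "Tq k \<noteq> \<infinity>" "Xq k = N0 - k" "Yq k = - sqrt (2 * (Wq - Zq k))"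
          using cs[of k] less m Zm[of k m] by auto
        have SK1: "Tq (Suc k) \<noteq> \<infinity>" "Yq (Suc k) = - sqrt (2 * (Wq - Zq (Suc k)))"
          using cs[of "Suc k"] less m Zm[of "Suc k" m] by auto
        obtain hk where hk: "Tq (Suc k) = Tq k + ereal hk" "Yq (Suc k) = Yq k + v (Xq k) * hk"
          using step_generic[OF SK(1) SK1(1)] by blast
        have wk: "0 < v (Xq k)" using vpos[OF nm N0, of "Xq k"] SK(2) by simp
        have Tk0: "0 \<le> Tq k" by (rule TT_nonneg)
        define Tk where "Tk = real_of_ereal (Tq k)"
        have TkE: "Tq k = ereal Tk" unfolding Tk_def using SK(1) Tk0 by (cases "Tq k") auto
        have "t < Tk + hk" using k(2) hk(1) TkE by simp
        hence "Lq t < Yq k + v (Xq k) * hk"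
          using L_piece(1)[OF k] TkE wk by (simp add: mult_strict_left_mono)
        also have "\<dots> = Yq (Suc k)" using hk(2) by simp
        also have "\<dots> \<le> 0"
        proof -
          have zk: "Zq (Suc k) \<le> Wq" using Zm[of "Suc k" m] less m by auto
          show ?thesis using SK1(2) zk by simp
        qed
        finally show ?thesis using Lt by simp
      next
        case equal
        have "Lq t = y + v x * (t - Tm)" using L_piece(1)[OF k] equal S TmE unfolding x_def y_def by simp
        hence "- y \<le> v x * (t - Tm)" using Lt by simp
        hence "(- y) / v x \<le> t - Tm" by (subst pos_divide_le_eq[OF w]) (simp add: mult.commute)
        thus ?thesis unfolding r_def by simp
      next
        case greater
        have "Tq (Suc m) \<le> Tq k" by (rule TT_mono) (use greater in simp)
        hence "ereal (Tm + h) \<le> ereal t" using k(1) TS by (metis order_trans)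
        thus ?thesis using rlt by simp
      qed
    next
      assume "\<forall>k. Tq (Suc k) \<le> ereal t"
      hence "ereal (Tm + h) \<le> ereal t" using TS by metis
      thus ?thesis using rlt by simp
    qed
  qed
  have Inf: "Inf HS = r" by (rule cInf_eq_minimum[OF rH lower])
  have ex: "\<exists>t\<ge>0. 0 \<le> Lq t" using rH unfolding HS_def by blast
  show ?thesis unfolding reversal_at_def HS_def[symmetric] Inf Xr using ex by auto
qed

lemma rev_exists: "\<exists>m\<le>N0. Zq m \<le> Wq \<and> (m = N0 \<or> Wq < Zq (Suc m))"
proof -
  define m where "m = (LEAST m. m = N0 \<or> Wq < Zq (Suc m))"
  have P: "m = N0 \<or> Wq < Zq (Suc m)" unfolding m_def by (rule LeastI[of _ N0]) simp
  have mN: "m \<le> N0" unfolding m_def by (rule Least_le) simp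
  have "Zq m \<le> Wq"
  proof (cases m)
    case 0 thus ?thesis by (simp add: ZZ_def)
  next
    case (Suc m')
    have "\<not> (m' = N0 \<or> Wq < Zq (Suc m'))" using not_less_Least[of m' "\<lambda>m. m = N0 \<or> Wq < Zq (Suc m)"] Suc m_def by simp
    thus ?thesis using Suc by simp
  qed
  thus ?thesis using P mN by blast
qed

end


lemma (in prob_space) indep_vars_reindex:
  assumes inj: "inj_on g I" and ind: "indep_vars M' X (g ` I)"
  shows "indep_vars (\<lambda>i. M' (g i)) (\<lambda>i. X (g i)) I"
  unfolding indep_vars_def2 indep_sets_def
proof (intro conjI ballI allI impI)
  show "random_variable (M' (g i)) (X (g i))" if "i \<in> I" for i
    using ind that unfolding indep_vars_def2 by auto
  show "{X (g i) -` A \<inter> space M |A. A \<in> sets (M' (g i))} \<subseteq> events" if "i \<in> I" for i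
    using ind that unfolding indep_vars_def2 indep_sets_def by auto
  fix J assume J: "J \<subseteq> I" "J \<noteq> {}" "finite J"
  fix A assume A: "A \<in> (\<Pi> j\<in>J. {X (g j) -` B \<inter> space M |B. B \<in> sets (M' (g j))})"
  define A' where "A' k = A (the_inv_into J g k)" for k
  have injJ: "inj_on g J" using inj J(1) by (rule inj_on_subset)
  have tg: "j \<in> J \<Longrightarrow> the_inv_into J g (g j) = j" for j by (rule the_inv_into_f_f[OF injJ])
  have A'g: "j \<in> J \<Longrightarrow> A' (g j) = A j" for j unfolding A'_def using tg by simp
  have A'P: "A' \<in> (\<Pi> k\<in>g ` J. {X k -` B \<inter> space M |B. B \<in> sets (M' k)})"
  proof (rule Pi_I)
    fix k assume "k \<in> g ` J"
    then obtain j where j: "j \<in> J" "k = g j" by blast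
    have "A j \<in> {X (g j) -` B \<inter> space M |B. B \<in> sets (M' (g j))}" using A j(1) by (rule Pi_mem)
    thus "A' k \<in> {X k -` B \<inter> space M |B. B \<in> sets (M' k)}" using A'g[OF j(1)] j(2) by simp
  qed
  have IS: "indep_sets (\<lambda>k. {X k -` B \<inter> space M |B. B \<in> sets (M' k)}) (g ` I)"
    using ind unfolding indep_vars_def2 by blast
  have "prob (\<Inter>k\<in>g ` J. A' k) = (\<Prod>k\<in>g ` J. prob (A' k))"
  proof (rule indep_setsD[OF IS])
    show "g ` J \<subseteq> g ` I" using J(1) by (rule image_mono)
    show "g ` J \<noteq> {}" using J(2) by simp
    show "finite (g ` J)" using J(3) by simp
    show "\<forall>j\<in>g ` J. A' j \<in> {X j -` B \<inter> space M |B. B \<in> sets (M' j)}" using A'P by (simp add: Pi_iff)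
  qed
  moreover have "(\<Inter>k\<in>g ` J. A' k) = (\<Inter>j\<in>J. A j)" using A'g by auto
  moreover have "(\<Prod>k\<in>g ` J. prob (A' k)) = (\<Prod>j\<in>J. prob (A j))"
    using A'g by (simp add: prod.reindex[OF injJ])
  ultimately show "prob (\<Inter>j\<in>J. A j) = (\<Prod>j\<in>J. prob (A j))" by simp
qed

lemma mu_inj:
  assumes nm: "noiseless_memory n N0 N1 v" and N0: "1 \<le> N0" and F: "condF2 n N0 N1 v \<or> condF' N0 v"
  shows "inj_on (mu n N0 N1 v) {0..<N0}"
proof (cases "condF2 n N0 N1 v")
  case True thus ?thesis by (simp add: condF2_def)
next
  case False
  with F have F': "\<forall>j<N0. v j \<ge> v (j + 1) \<and> v (j + 1) > 0" by (simp add: condF'_def)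
  have vmono: "i \<le> i' \<Longrightarrow> i' \<le> N0 \<Longrightarrow> v i' \<le> v i" for i i'
  proof (induction i' rule: dec_induct)
    case base thus ?case by simp
  next
    case (step k) thus ?case using F'[rule_format, of k] by simp
  qed
  have strict: "mu n N0 N1 v i' < mu n N0 N1 v i" if "i < i'" "i' < N0" for i i'
  proof -
    have c1: "0 < cc n N0 N1 v i" using ccpos[OF nm N0, of i] that by simp
    have "cc n N0 N1 v i' = sum v {0..i'}" using that by (simp add: cc_def)
    also have "\<dots> = sum v ({0..i} \<union> {Suc i..i'})"
      using that by (intro arg_cong[where f="sum v"]) auto
    also have "\<dots> = sum v {0..i} + sum v {Suc i..i'}"
      by (rule sum.union_disjoint) auto
    also have "sum v {Suc i..i'} > 0" by (rule sum_pos) (use that vpos[OF nm N0] in auto)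
    hence "sum v {0..i} + sum v {Suc i..i'} > sum v {0..i}" by simp
    finally have ccl: "cc n N0 N1 v i < cc n N0 N1 v i'" using that by (simp add: cc_def)
    have vle: "v (i'+1) \<le> v (i+1)" using vmono[of "i+1" "i'+1"] that by simp
    have vp: "0 < v (i'+1)" using vpos[OF nm N0, of "i'+1"] that by simp
    have "v (i'+1) / cc n N0 N1 v i' < v (i'+1) / cc n N0 N1 v i"
      using c1 ccl vp by (simp add: divide_strict_left_mono)
    also have "\<dots> \<le> v (i+1) / cc n N0 N1 v i" using c1 vle by (simp add: divide_right_mono)
    finally show ?thesis by (simp add: mu_def)
  qed
  show ?thesis
  proof (rule inj_onI)
    fix i i' assume "i \<in> {0..<N0}" "i' \<in> {0..<N0}" "mu n N0 N1 v i = mu n N0 N1 v i'"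
    thus "i = i'" using strict[of i i'] strict[of i' i] by (cases i i' rule: linorder_cases) auto
  qed
qed


lemma Gf_target:
  fixes \<mu> :: "nat \<Rightarrow> real"
  assumes mk: "m + k = N0" "1 \<le> k"
  defines "r \<equiv> \<lambda>i. 1 / \<mu> (N0 - 1 - i)"
  shows "Gf r m (l^2/2) = (\<Prod>j=k..N0-1. 1 / \<mu> j) *
                 (\<Sum>j=k-1..N0-1. exp (- l\<^sup>2 / (2 * \<mu> j)) *
                    (\<Prod>i\<in>{k-1..N0-1} - {j}. 1 / (1 / \<mu> i - 1 / \<mu> j)))"
proof -
  have P1: "(\<Prod>i<m. r i) = (\<Prod>j=k..N0-1. 1 / \<mu> j)"
    unfolding r_def
    by (rule prod.reindex_bij_witness[where i="\<lambda>b. N0 - 1 - b" and j="\<lambda>a. N0 - 1 - a"])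
       (use mk in auto)
  have inner: "cf r m a = (\<Prod>i\<in>{k-1..N0-1} - {N0-1-a}. 1 / (1 / \<mu> i - 1 / \<mu> (N0-1-a)))"
    if a: "a \<le> m" for a
    unfolding cf_def r_def
    by (rule prod.reindex_bij_witness[where i="\<lambda>b. N0 - 1 - b" and j="\<lambda>a. N0 - 1 - a"])
       (use mk a in auto)
  have ex: "exp (- r a * (l^2/2)) = exp (- l\<^sup>2 / (2 * \<mu> (N0-1-a)))" for a
    unfolding r_def by (simp add: field_simps)
  have P2: "(\<Sum>j\<le>m. exp (- r j * (l^2/2)) * cf r m j) =
      (\<Sum>j=k-1..N0-1. exp (- l\<^sup>2 / (2 * \<mu> j)) * (\<Prod>i\<in>{k-1..N0-1} - {j}. 1 / (1 / \<mu> i - 1 / \<mu> j)))"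
  proof (rule sum.reindex_bij_witness[where i="\<lambda>b. N0 - 1 - b" and j="\<lambda>a. N0 - 1 - a"])
    fix a assume a: "a \<in> {..m}"
    show "exp (- l\<^sup>2 / (2 * \<mu> (N0 - 1 - a))) * (\<Prod>i\<in>{k-1..N0-1} - {N0 - 1 - a}. 1 / (1 / \<mu> i - 1 / \<mu> (N0 - 1 - a)))
       = exp (- r a * (l^2/2)) * cf r m a"
      using inner[of a] a ex[of a] by simp
  qed (use mk in auto)
  show ?thesis unfolding Gf_def P1 P2 ..
qed


lemma rev_iff:
  assumes nm: "noiseless_memory n N0 N1 v" and N0: "1 \<le> N0" and l: "l < 0"
    and ep: "\<And>j k. j \<le> n \<Longrightarrow> 0 < e j k"
  shows "reversal_at n v (aa n N0 N1 v) N0 l e k \<longleftrightarrow>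
     k \<le> N0 \<and> ZZ n N0 N1 v e (N0-k) \<le> l^2/2 \<and> (N0-k = N0 \<or> l^2/2 < ZZ n N0 N1 v e (Suc (N0-k)))"
proof -
  have "\<exists>m\<le>N0. ZZ n N0 N1 v e m \<le> l^2/2 \<and> (m = N0 \<or> l^2/2 < ZZ n N0 N1 v e (Suc m))"
    by (rule rev_exists[OF nm N0 l]) (rule ep)
  then obtain m where m: "m \<le> N0" "ZZ n N0 N1 v e m \<le> l^2/2" "m = N0 \<or> l^2/2 < ZZ n N0 N1 v e (Suc m)" by blast
  have "reversal_at n v (aa n N0 N1 v) N0 l e k \<longleftrightarrow> k = N0 - m"
    by (rule rev_char[OF nm N0 l]) (use ep m in auto)
  also have "\<dots> \<longleftrightarrow> k \<le> N0 \<and> ZZ n N0 N1 v e (N0-k) \<le> l^2/2 \<and> (N0-k = N0 \<or> l^2/2 < ZZ n N0 N1 v e (Suc (N0-k)))"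
  proof
    assume "k = N0 - m" thus "k \<le> N0 \<and> ZZ n N0 N1 v e (N0-k) \<le> l^2/2 \<and> (N0-k = N0 \<or> l^2/2 < ZZ n N0 N1 v e (Suc (N0-k)))"
      using m by (simp add: diff_diff_cancel)
  next
    assume A: "k \<le> N0 \<and> ZZ n N0 N1 v e (N0-k) \<le> l^2/2 \<and> (N0-k = N0 \<or> l^2/2 < ZZ n N0 N1 v e (Suc (N0-k)))"
    have "reversal_at n v (aa n N0 N1 v) N0 l e k \<longleftrightarrow> k = N0 - (N0 - k)"
      by (rule rev_char[OF nm N0 l]) (use ep A in auto)
    moreover have "reversal_at n v (aa n N0 N1 v) N0 l e k \<longleftrightarrow> k = N0 - m"
      by (rule rev_char[OF nm N0 l]) (use ep m in auto)
    ultimately show "k = N0 - m" using A by simp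
  qed
  finally show ?thesis .
qed


theorem mainTheorem4:
  fixes M :: "'a measure" and E :: "nat \<Rightarrow> nat \<Rightarrow> 'a \<Rightarrow> real"
    and n N0 N1 :: nat and v :: "nat \<Rightarrow> real" and l :: real
  assumes "prob_space M"
    and "prob_space.indep_vars M (\<lambda>_. borel) (\<lambda>(j, k). E j k) ({..n} \<times> UNIV)"
    and "\<And>j k. j \<le> n \<Longrightarrow> distributed M lborel (E j k) (exponential_density 1)"
    and "noiseless_memory n N0 N1 v"
    and "1 \<le> N0"
    and "condF2 n N0 N1 v \<or> condF' N0 v"
    and "l < 0"
  defines "p \<equiv> \<lambda>j. measure M {\<omega> \<in> space M.
             reversal_at n v (noiseless_rate n N0 N1 v) N0 l (\<lambda>j k. E j k \<omega>) j}"
    and "\<mu> \<equiv> mu n N0 N1 v"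
  shows "p N0 = exp (- l\<^sup>2 / (2 * \<mu> (N0 - 1))) \<and>
         (\<forall>k. 0 < k \<and> k < N0 \<longrightarrow>
           p k = (\<Prod>j=k..N0-1. 1 / \<mu> j) *
                 (\<Sum>j=k-1..N0-1. exp (- l\<^sup>2 / (2 * \<mu> j)) *
                    (\<Prod>i\<in>{k-1..N0-1} - {j}. 1 / (1 / \<mu> i - 1 / \<mu> j)))) \<and>
         p 0 = 1 - (\<Sum>k=1..N0. p k)"
proof -
  interpret P: prob_space M by fact
  note nm = assms(4) and N0 = assms(5) and l = assms(7)
  note dE = assms(3)
  have Em[measurable]: "(\<lambda>\<omega>. E j k \<omega>) \<in> borel_measurable M" if "j \<le> n" for j k
    using distributed_measurable[OF dE[OF that]] by simp
  define Rv where "Rv j = {\<omega> \<in> space M. reversal_at n v (noiseless_rate n N0 N1 v) N0 l (\<lambda>j k. E j k \<omega>) j}" for j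
  have p_eq: "p j = P.prob (Rv j)" for j unfolding p_def Rv_def by simp
  have Rm: "Rv j \<in> P.events" for j unfolding Rv_def by (rule rev_meas[OF nm]) (rule Em)
  have pos1: "AE \<omega> in M. 0 < E j k \<omega>" if j: "j \<le> n" for j k
  proof -
    have "P.prob {\<omega>\<in>space M. E j k \<omega> \<le> 0} = 1 - exp (- 0 * 1)"
      by (rule P.exponential_distributedD_le[OF dE[OF j]]) auto
    hence pr: "P.prob {\<omega>\<in>space M. E j k \<omega> \<le> 0} = 0" by simp
    have ms: "{\<omega>\<in>space M. \<not> 0 < E j k \<omega>} \<in> sets M" using Em[OF j] by measurable
    have "emeasure M {\<omega>\<in>space M. \<not> 0 < E j k \<omega>} = 0"
      using pr by (simp add: P.emeasure_eq_measure not_less)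
    thus ?thesis by (subst AE_iff_measurable[OF ms refl]) auto
  qed
  have good: "AE \<omega> in M. \<forall>j. j \<le> n \<longrightarrow> (\<forall>k. 0 < E j k \<omega>)"
    unfolding AE_all_countable
  proof
    fix j show "AE \<omega> in M. j \<le> n \<longrightarrow> (\<forall>k. 0 < E j k \<omega>)"
    proof (cases "j \<le> n")
      case True
      have "AE \<omega> in M. \<forall>k. 0 < E j k \<omega>" unfolding AE_all_countable using pos1[OF True] by blast
      thus ?thesis by simp
    qed simp
  qed
  define Z where "Z \<omega> m = ZZ n N0 N1 v (\<lambda>j k. E j k \<omega>) m" for \<omega> m
  have RI: "reversal_at n v (noiseless_rate n N0 N1 v) N0 l (\<lambda>j k. E j k \<omega>) k \<longleftrightarrow>
     k \<le> N0 \<and> Z \<omega> (N0-k) \<le> l^2/2 \<and> (N0-k = N0 \<or> l^2/2 < Z \<omega> (Suc (N0-k)))"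
    if "\<forall>j. j \<le> n \<longrightarrow> (\<forall>k. 0 < E j k \<omega>)" for \<omega> k
    unfolding Z_def by (rule rev_iff[OF nm N0 l]) (use that in auto)
  define X where "X i \<omega> = \<mu> (N0-1-i) * E (N0-1-i) i \<omega>" for i \<omega>
  define r where "r i = 1 / \<mu> (N0-1-i)" for i
  have N0n: "N0 < n" using nm by (simp add: noiseless_memory_def)
  have mup: "i < N0 \<Longrightarrow> 0 < \<mu> i" for i unfolding \<mu>_def by (rule mupos[OF nm N0])
  have rpos: "0 < r i" if "i \<le> N0 - 1" for i using mup[of "N0-1-i"] that N0 unfolding r_def by simp
  have injmu: "inj_on \<mu> {0..<N0}" unfolding \<mu>_def by (rule mu_inj[OF nm N0 assms(6)])
  have rinj: "inj_on r {..N0-1}"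
  proof (rule inj_onI)
    fix i i' assume i: "i \<in> {..N0-1}" "i' \<in> {..N0-1}" "r i = r i'"
    hence "\<mu> (N0-1-i) = \<mu> (N0-1-i')" unfolding r_def by simp
    hence "N0-1-i = N0-1-i'" using inj_onD[OF injmu] i N0 by auto
    thus "i = i'" using i by simp
  qed
  have dX: "distributed M lborel (X i) (\<lambda>x. ennreal (exponential_density (r i) x))" if "i \<le> N0 - 1" for i
  proof -
    have j: "N0 - 1 - i \<le> n" using N0n by simp
    have "distributed M lborel (\<lambda>\<omega>. \<mu> (N0-1-i) * E (N0-1-i) i \<omega>) (erlang_density 0 (1 / \<mu> (N0-1-i)))"
      by (rule P.erlang_distributed_mult_const[OF dE[OF j]]) (use mup[of "N0-1-i"] N0 in auto)
    thus ?thesis unfolding X_def r_def by (simp add: fun_eq_iff)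
  qed
  have indX: "P.indep_vars (\<lambda>_. borel) X {..N0-1}"
  proof -
    define g where "g i = (N0-1-i, i)" for i :: nat
    have ing: "inj_on g {..N0-1}" unfolding g_def by (rule inj_onI) auto
    have "P.indep_vars (\<lambda>_. borel) (\<lambda>(j, k). E j k) (g ` {..N0-1})"
      by (rule P.indep_vars_subset[OF assms(2)]) (use N0n in \<open>auto simp: g_def\<close>)
    hence "P.indep_vars (\<lambda>i. borel) (\<lambda>i. (\<lambda>(j, k). E j k) (g i)) {..N0-1}"
      using P.indep_vars_reindex[OF ing] by simp
    hence "P.indep_vars (\<lambda>i. borel) (\<lambda>i \<omega>. (\<lambda>z. \<mu> (N0-1-i) * z) ((\<lambda>(j, k). E j k) (g i) \<omega>)) {..N0-1}"
      by (rule P.indep_vars_compose2) auto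
    thus ?thesis unfolding X_def g_def by simp
  qed
  have ZX: "Z \<omega> (Suc q) = (\<Sum>i\<le>q. X i \<omega>)" for \<omega> q
    unfolding Z_def ZZ_def X_def \<mu>_def lessThan_Suc_atMost ..
  have Z0: "Z \<omega> 0 = 0" for \<omega> unfolding Z_def ZZ_def by simp
  have W0: "0 \<le> l^2/2" by simp
  have pk: "p k = Gf r (N0 - k) (l^2/2)" if k: "1 \<le> k" "k \<le> N0" for k
  proof -
    have Xm[measurable]: "X i \<in> borel_measurable M" if "i \<le> N0 - 1" for i
      using distributed_measurable[OF dX[OF that]] by simp
    show ?thesis
    proof (cases "k = N0")
      case True
      have "p k = P.prob {\<omega>\<in>space M. l^2/2 < X 0 \<omega>}"
        unfolding p_eq
      proof (rule P.finite_measure_eq_AE)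
        show "AE \<omega> in M. (\<omega> \<in> Rv k) = (\<omega> \<in> {\<omega>\<in>space M. l^2/2 < X 0 \<omega>})"
          using good
        proof (rule AE_mp, intro AE_I2 impI)
          fix \<omega> assume g: "\<omega> \<in> space M" "\<forall>j. j \<le> n \<longrightarrow> (\<forall>k. 0 < E j k \<omega>)"
          show "(\<omega> \<in> Rv k) = (\<omega> \<in> {\<omega>\<in>space M. l^2/2 < X 0 \<omega>})"
            unfolding Rv_def using RI[OF g(2), of k] True g(1) Z0 ZX[of \<omega> 0] N0 by auto
        qed
        show "Rv k \<in> P.events" by (rule Rm)
        show "{\<omega> \<in> space M. l^2/2 < X 0 \<omega>} \<in> P.events" by measurable
      qed
      also have "\<dots> = Gf r 0 (l^2/2)"
        by (rule P.hyp_prob0[OF rpos dX W0]) simp_all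
      finally show ?thesis using True by simp
    next
      case False
      obtain q where q: "N0 - k = Suc q" using False k by (cases "N0 - k") auto
      have qm: "Suc q \<le> N0 - 1" using q k by simp
      have "p k = P.prob {\<omega>\<in>space M. (\<Sum>i\<le>q. X i \<omega>) \<le> l^2/2 \<and> l^2/2 < (\<Sum>i\<le>q. X i \<omega>) + X (Suc q) \<omega>}"
        unfolding p_eq
      proof (rule P.finite_measure_eq_AE)
        show "AE \<omega> in M. (\<omega> \<in> Rv k) = (\<omega> \<in> {\<omega>\<in>space M. (\<Sum>i\<le>q. X i \<omega>) \<le> l^2/2 \<and> l^2/2 < (\<Sum>i\<le>q. X i \<omega>) + X (Suc q) \<omega>})"
          using good
        proof (rule AE_mp, intro AE_I2 impI)
          fix \<omega> assume g: "\<omega> \<in> space M" "\<forall>j. j \<le> n \<longrightarrow> (\<forall>k. 0 < E j k \<omega>)"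
          have z2: "Z \<omega> (Suc (Suc q)) = (\<Sum>i\<le>q. X i \<omega>) + X (Suc q) \<omega>" using ZX[of \<omega> "Suc q"] by simp
          show "(\<omega> \<in> Rv k) = (\<omega> \<in> {\<omega>\<in>space M. (\<Sum>i\<le>q. X i \<omega>) \<le> l^2/2 \<and> l^2/2 < (\<Sum>i\<le>q. X i \<omega>) + X (Suc q) \<omega>})"
            unfolding Rv_def using RI[OF g(2), of k] g(1) q k ZX[of \<omega> q] z2 by auto
        qed
        show "Rv k \<in> P.events" by (rule Rm)
        have [measurable]: "X i \<in> borel_measurable M" if "i \<le> Suc q" for i using Xm qm that by simp
        show "{\<omega> \<in> space M. (\<Sum>i\<le>q. X i \<omega>) \<le> l^2/2 \<and> l^2/2 < (\<Sum>i\<le>q. X i \<omega>) + X (Suc q) \<omega>} \<in> P.events"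
          by measurable
      qed
      also have "\<dots> = Gf r (Suc q) (l^2/2)"
        by (rule P.hyp_prob[OF _ rinj dX indX qm W0]) (use rpos in auto)
      finally show ?thesis using q by simp
    qed
  qed
  have c1: "p N0 = exp (- l\<^sup>2 / (2 * \<mu> (N0 - 1)))"
  proof -
    have "p N0 = Gf r 0 (l^2/2)" using pk[of N0] N0 by simp
    also have "\<dots> = exp (- r 0 * (l^2/2))" by (rule Gf_0)
    also have "- r 0 * (l^2/2) = - l\<^sup>2 / (2 * \<mu> (N0 - 1))"
      unfolding r_def using mup[of "N0 - 1"] N0 by (simp add: field_simps)
    finally show ?thesis .
  qed
  have c2: "p k = (\<Prod>j=k..N0-1. 1 / \<mu> j) *
                 (\<Sum>j=k-1..N0-1. exp (- l\<^sup>2 / (2 * \<mu> j)) *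
                    (\<Prod>i\<in>{k-1..N0-1} - {j}. 1 / (1 / \<mu> i - 1 / \<mu> j)))" if "0 < k" "k < N0" for k
    using pk[of k] that Gf_target[of "N0 - k" k N0 \<mu> l] unfolding r_def by simp
  have c3: "p 0 = 1 - (\<Sum>k=1..N0. p k)"
  proof -
    have disj: "disjoint_family_on Rv {0..N0}" unfolding disjoint_family_on_def Rv_def reversal_at_def by auto
    have "(\<Sum>j\<in>{0..N0}. p j) = P.prob (\<Union>j\<in>{0..N0}. Rv j)"
      unfolding p_eq by (rule P.finite_measure_finite_Union[symmetric]) (use Rm disj in auto)
    also have "\<dots> = P.prob (space M)"
    proof (rule P.finite_measure_eq_AE)
      show "AE \<omega> in M. (\<omega> \<in> (\<Union>j\<in>{0..N0}. Rv j)) = (\<omega> \<in> space M)"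
        using good
      proof (rule AE_mp, intro AE_I2 impI)
        fix \<omega> assume g: "\<omega> \<in> space M" "\<forall>j. j \<le> n \<longrightarrow> (\<forall>k. 0 < E j k \<omega>)"
        have "\<exists>m\<le>N0. ZZ n N0 N1 v (\<lambda>j k. E j k \<omega>) m \<le> l^2/2 \<and> (m = N0 \<or> l^2/2 < ZZ n N0 N1 v (\<lambda>j k. E j k \<omega>) (Suc m))"
          by (rule rev_exists[OF nm N0 l]) (use g in auto)
        then obtain m where m: "m \<le> N0" "Z \<omega> m \<le> l^2/2" "m = N0 \<or> l^2/2 < Z \<omega> (Suc m)"
          unfolding Z_def by blast
        have "\<omega> \<in> Rv (N0 - m)" unfolding Rv_def using RI[OF g(2), of "N0 - m"] m g(1) by simp
        thus "(\<omega> \<in> (\<Union>j\<in>{0..N0}. Rv j)) = (\<omega> \<in> space M)" using g(1) by auto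
      qed
      show "(\<Union>j\<in>{0..N0}. Rv j) \<in> sets M" using Rm by auto
    qed simp
    also have "\<dots> = 1" by (rule P.prob_space)
    finally have "(\<Sum>j\<in>{0..N0}. p j) = 1" .
    moreover have "(\<Sum>j\<in>{0..N0}. p j) = p 0 + (\<Sum>k=1..N0. p k)"
      by (simp add: sum.atLeast_Suc_atMost)
    ultimately show ?thesis by simp
  qed
  show ?thesis using c1 c2 c3 by blast
qed


end
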